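(* For every $\mathsf{SKS}$ derivation $\Phi$ there exists an $\mathsf{SKS}$ derivation with the same premiss and conclusion as $\Phi$ whose associated atomic flow is cycle-free.
   Context: Formulae are built from the units $\mathsf f$ and $\mathsf t$, atoms, disjunction $[\alpha\vee\beta]$ and conjunction $(\alpha\wedge\beta)$; on atoms there is an involution $a\mapsto\bar a$ with $\bar a\neq a$. An inference step of a rule $\alpha/\beta$ rewrites $\xi\{\alpha\}$ into $\xi\{\beta\}$ for an arbitrary context (formula with a hole) $\xi$. A derivation from $\alpha$ (premiss) to $\beta$ (conclusion) is a finite chain of steps from $\alpha$ to $\beta$. System $\mathsf{SKS}$: interaction $\mathsf t/[a\vee\bar a]$; weakening $\mathsf f/a$; contraction $[a\vee a]/a$; cut $(a\wedge\bar a)/\mathsf f$; coweakening $a/\mathsf t$; cocontraction $a/(a\wedge a)$; switch $(\alpha\wedge[\beta\vee\gamma])/[(\alpha\wedge\beta)\vee\gamma]$; medial $[(\alpha\wedge\beta)\vee(\gamma\wedge\delta)]/([\alpha\vee\gamma]\wedge[\beta\vee\delta])$; and $\gamma/\delta$ whenever $\gamma=\delta$ is (either direction of) an instance of commutativity or associativity of $\vee,\wedge$, $[\alpha\vee\mathsf f]=\alpha$, $(\alpha\wedge\mathsf t)=\alpha$, $[\mathsf t\vee\mathsf t]=\mathsf t$, $(\mathsf f\wedge\mathsf f)=\mathsf f$. The atomic flow of an $\mathsf{SKS}$ derivation is a finite directed graph with vertices labelled interaction, cut, weakening, coweakening, contraction or cocontraction, and edges that may dangle at the top ($up=\top$) or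 bottom ($lo=\bot$): each atom occurrence is mapped to an edge by tracing occurrences through steps (occurrences in contexts and in the instantiated subformulae of switch, medial, $=$ keep their edge); each step of an atomic rule gives a vertex with that label whose upper edges ($lo(\epsilon)=\nu$) are the redex occurrences in the step's premiss and whose lower edges ($up(\epsilon)=\nu$) are those in its conclusion; occurrences in the premiss (conclusion) of the derivation have $up=\top$ ($lo=\bot$). A path from $\nu$ to $\nu'$ is a sequence of edges $\epsilon_1,\dots,\epsilon_h$ with $lo(\epsilon_i)=up(\epsilon_{i+1})$, $up(\epsilon_1)=\nu$, $lo(\epsilon_h)=\nu'$; its reversal is a path from $\nu'$ to $\nu$. An $\mathsf{ai}$-path from $\nu$ to $\nu'$ is either a path from $\nu$ to $\nu'$ or a sequence $\epsilon_1,\dots,\epsilon_k,\epsilon_{k+1},\dots,\epsilon_h$ with $\epsilon_k\neq\epsilon_{k+1}$ such that, for some interaction or cut vertex $\nu''$, $\epsilon_1,\dots,\epsilon_k$ is an $\mathsf{ai}$-path from $\nu$ to $\nu''$ and $\epsilon_{k+1},\dots,\epsilon_h$ is an $\mathsf{ai}$-path from $\nu''$ to $\nu'$. An $\mathsf{ai}$-cycle is an $\mathsf{ai}$-path from a vertex to itself in which no edge appears twice. A flow is cycle-free if it has no $\mathsf{ai}$-cycle. *)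

theory Defs
  imports Main
begin

datatype 'b fm = FF | TT | At 'b | Or "'b fm" "'b fm" | And "'b fm" "'b fm"

datatype 'b ctx = Hole | COrL "'b ctx" "'b fm" | COrR "'b fm" "'b ctx"
  | CAndL "'b ctx" "'b fm" | CAndR "'b fm" "'b ctx"

fun plug :: "'b ctx \<Rightarrow> 'b fm \<Rightarrow> 'b fm" where
  "plug Hole x = x"
| "plug (COrL C b) x = Or (plug C x) b"
| "plug (COrR a C) x = Or a (plug C x)"
| "plug (CAndL C b) x = And (plug C x) b"
| "plug (CAndR a C) x = And a (plug C x)"

fun occs :: "'b fm \<Rightarrow> 'b list" where
  "occs FF = []"
| "occs TT = []"
| "occs (At a) = [a]"
| "occs (Or x y) = occs x @ occs y"
| "occs (And x y) = occs x @ occs y"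

text \<open>To define atomic flows, every atom occurrence carries a tag (a natural number)
  naming the edge of the flow it is mapped to.\<close>

type_synonym 'a tfm = "('a \<times> nat) fm"

definition erase :: "'a tfm \<Rightarrow> 'a fm" where
  "erase \<phi> = map_fm fst \<phi>"

definition tags :: "'a tfm \<Rightarrow> nat list" where
  "tags \<phi> = map snd (occs \<phi>)"

datatype vkind = Interaction | Weakening | Contraction | Cut | Coweakening | Cocontraction

text \<open>Vertex information of an atomic step: label, upper edges (redex occurrences in the
  premiss), lower edges (redex occurrences in the conclusion).\<close>
type_synonym vinfo = "vkind \<times> nat list \<times> nat list"

text \<open>The basic equations (each may be used in either direction).\<close>
inductive eq_base :: "'b fm \<Rightarrow> 'b fm \<Rightarrow> bool" where
  or_comm: "eq_base (Or a b) (Or b a)"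
| and_comm: "eq_base (And a b) (And b a)"
| or_assoc: "eq_base (Or (Or a b) c) (Or a (Or b c))"
| and_assoc: "eq_base (And (And a b) c) (And a (And b c))"
| or_unit: "eq_base (Or a FF) a"
| and_unit: "eq_base (And a TT) a"
| tt_idem: "eq_base (Or TT TT) TT"
| ff_idem: "eq_base (And FF FF) FF"

text \<open>Instances of the rules of SKS on tagged formulae (the redex \<alpha> and its replacement
  \<beta> of a rule \<alpha>/\<beta>); the last argument is the vertex created (None for
  switch, medial and equality, whose instantiated subformulae keep their tags).
  bar is the involution on atoms.\<close>
inductive rule_inst :: "('a \<Rightarrow> 'a) \<Rightarrow> 'a tfm \<Rightarrow> 'a tfm \<Rightarrow> vinfo option \<Rightarrow> bool"
  for bar :: "'a \<Rightarrow> 'a" where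
  ai_down: "rule_inst bar TT (Or (At (a, i)) (At (bar a, j))) (Some (Interaction, [], [i, j]))"
| aw_down: "rule_inst bar FF (At (a, i)) (Some (Weakening, [], [i]))"
| ac_down: "rule_inst bar (Or (At (a, i)) (At (a, j))) (At (a, k)) (Some (Contraction, [i, j], [k]))"
| ai_up: "rule_inst bar (And (At (a, i)) (At (bar a, j))) FF (Some (Cut, [i, j], []))"
| aw_up: "rule_inst bar (At (a, i)) TT (Some (Coweakening, [i], []))"
| ac_up: "rule_inst bar (At (a, i)) (And (At (a, j)) (At (a, k))) (Some (Cocontraction, [i], [j, k]))"
| switch: "rule_inst bar (And x (Or y z)) (Or (And x y) z) None"
| medial: "rule_inst bar (Or (And x y) (And z w)) (And (Or x z) (Or y w)) None"
| eq_l: "eq_base x y \<Longrightarrow> rule_inst bar x y None"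
| eq_r: "eq_base y x \<Longrightarrow> rule_inst bar x y None"

text \<open>A step: context, redex in the premiss, redex in the conclusion, vertex info.\<close>
type_synonym 'a step = "('a \<times> nat) ctx \<times> 'a tfm \<times> 'a tfm \<times> vinfo option"

text \<open>A (tagged) derivation: the chain of formulae fs = [\<phi>0, ..., \<phi>n] and the steps.\<close>
type_synonym 'a deriv = "'a tfm list \<times> 'a step list"

definition step_info :: "'a step \<Rightarrow> vinfo option" where
  "step_info s = snd (snd (snd s))"

definition sks_deriv :: "('a \<Rightarrow> 'a) \<Rightarrow> 'a deriv \<Rightarrow> bool" where
  "sks_deriv bar D \<longleftrightarrow>
     (let fs = fst D; st = snd D in
      length fs = Suc (length st)
    \<and> (\<forall>k < length st. case st ! k of (C, r, r', v) \<Rightarrow>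
           fs ! k = plug C r \<and> fs ! Suc k = plug C r' \<and> rule_inst bar r r' v)
    \<comment> \<open>distinct occurrences in one formula are distinct edges\<close>
    \<and> (\<forall>k < length fs. distinct (tags (fs ! k)))
    \<comment> \<open>edges created by an atomic step are new\<close>
    \<and> (\<forall>k < length st. \<forall>c u l. step_info (st ! k) = Some (c, u, l) \<longrightarrow>
           (\<forall>e \<in> set l. \<forall>j \<le> k. e \<notin> set (tags (fs ! j)))))"

definition premiss :: "'a deriv \<Rightarrow> 'a fm" where
  "premiss D = erase (hd (fst D))"

definition conclusion :: "'a deriv \<Rightarrow> 'a fm" where
  "conclusion D = erase (last (fst D))"

text \<open>Nodes: the top and bottom dangling ends, and vertices (indexed by the step).
  Edges are tags.\<close>
datatype node = Top | Bot | V nat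

definition is_vertex :: "'a deriv \<Rightarrow> nat \<Rightarrow> bool" where
  "is_vertex D k \<longleftrightarrow> k < length (snd D) \<and> step_info (snd D ! k) \<noteq> None"

definition vertex_kind :: "'a deriv \<Rightarrow> nat \<Rightarrow> vkind" where
  "vertex_kind D k = fst (the (step_info (snd D ! k)))"

text \<open>up e = \<nu> and lo e = \<nu> (as relations; they are functional on derivations).\<close>
definition up_rel :: "'a deriv \<Rightarrow> nat \<Rightarrow> node \<Rightarrow> bool" where
  "up_rel D e \<nu> \<longleftrightarrow>
     (\<nu> = Top \<and> e \<in> set (tags (hd (fst D))))
   \<or> (\<exists>k c u l. \<nu> = V k \<and> k < length (snd D) \<and> step_info (snd D ! k) = Some (c, u, l) \<and> e \<in> set l)"

definition lo_rel :: "'a deriv \<Rightarrow> nat \<Rightarrow> node \<Rightarrow> bool" where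
  "lo_rel D e \<nu> \<longleftrightarrow>
     (\<nu> = Bot \<and> e \<in> set (tags (last (fst D))))
   \<or> (\<exists>k c u l. \<nu> = V k \<and> k < length (snd D) \<and> step_info (snd D ! k) = Some (c, u, l) \<and> e \<in> set u)"

definition dpath :: "'a deriv \<Rightarrow> node \<Rightarrow> node \<Rightarrow> nat list \<Rightarrow> bool" where
  "dpath D \<nu> \<nu>' es \<longleftrightarrow> es \<noteq> [] \<and> up_rel D (hd es) \<nu> \<and> lo_rel D (last es) \<nu>'
     \<and> (\<forall>i. Suc i < length es \<longrightarrow> (\<exists>\<mu>. lo_rel D (es ! i) \<mu> \<and> up_rel D (es ! Suc i) \<mu>))"

definition fpath :: "'a deriv \<Rightarrow> node \<Rightarrow> node \<Rightarrow> nat list \<Rightarrow> bool" where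
  "fpath D \<nu> \<nu>' es \<longleftrightarrow> dpath D \<nu> \<nu>' es \<or> dpath D \<nu>' \<nu> (rev es)"

inductive aipath :: "'a deriv \<Rightarrow> node \<Rightarrow> node \<Rightarrow> nat list \<Rightarrow> bool" for D where
  base: "fpath D \<nu> \<nu>' es \<Longrightarrow> aipath D \<nu> \<nu>' es"
| join: "\<lbrakk> aipath D \<nu> (V k) xs; aipath D (V k) \<nu>' ys; last xs \<noteq> hd ys;
          is_vertex D k; vertex_kind D k \<in> {Interaction, Cut} \<rbrakk>
         \<Longrightarrow> aipath D \<nu> \<nu>' (xs @ ys)"

definition cycle_free :: "'a deriv \<Rightarrow> bool" where
  "cycle_free D \<longleftrightarrow> \<not> (\<exists>k es. is_vertex D k \<and> aipath D (V k) (V k) es \<and> distinct es)"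

end

theory Submission
  imports Defs "HOL-Library.Multiset"
begin

fun cl :: "'b ctx \<Rightarrow> 'b list" where
  "cl Hole = []" | "cl (COrL C b) = cl C" | "cl (COrR a C) = occs a @ cl C"
| "cl (CAndL C b) = cl C" | "cl (CAndR a C) = occs a @ cl C"
fun cr :: "'b ctx \<Rightarrow> 'b list" where
  "cr Hole = []" | "cr (COrL C b) = cr C @ occs b" | "cr (COrR a C) = cr C"
| "cr (CAndL C b) = cr C @ occs b" | "cr (CAndR a C) = cr C"

lemma occs_plug: "occs (plug C x) = cl C @ occs x @ cr C"
  by (induction C) auto

lemma eq_base_mset: "eq_base x y \<Longrightarrow> mset (occs x) = mset (occs y)"
  by (induction rule: eq_base.induct) (auto simp: ac_simps)

lemma rule_none: "rule_inst bar r r' None \<Longrightarrow> mset (occs r') = mset (occs r)"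
  by (erule rule_inst.cases) (auto dest: eq_base_mset simp: ac_simps)

lemma rule_some: "rule_inst bar r r' (Some (c,u,l)) \<Longrightarrow> tags r = u \<and> tags r' = l"
  by (erule rule_inst.cases) (auto simp: tags_def)

locale flow =
  fixes bar :: "'a \<Rightarrow> 'a" and sgn :: "'a \<Rightarrow> bool" and fs :: "'a tfm list" and st :: "'a step list"
  assumes bb: "\<And>a. bar (bar a) = a" and bn: "\<And>a. bar a \<noteq> a"
    and sg: "\<And>a. sgn (bar a) = (\<not> sgn a)"
    and sd: "sks_deriv bar (fs, st)"
    and par: "\<And>k a e. k < length fs \<Longrightarrow> (a,e) \<in> set (occs (fs!k)) \<Longrightarrow> even e = sgn a"
    and q1: "\<And>k u l. k < length st \<Longrightarrow> step_info (st!k) = Some (Interaction,u,l)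
               \<Longrightarrow> \<exists>s\<in>set l. s \<in> set (tags (last fs))"
begin

lemma L: "length fs = Suc (length st)"
  using sd by (simp add: sks_deriv_def Let_def)

lemma ST: "k < length st \<Longrightarrow> \<exists>C r r' v. st!k = (C,r,r',v) \<and> fs!k = plug C r \<and> fs!Suc k = plug C r' \<and> rule_inst bar r r' v"
  using sd unfolding sks_deriv_def Let_def by (cases "st!k") force

lemma DI: "k < length fs \<Longrightarrow> distinct (tags (fs!k))"
  using sd by (simp add: sks_deriv_def Let_def)

lemma FR: "k < length st \<Longrightarrow> step_info (st!k) = Some (c,u,l) \<Longrightarrow> e \<in> set l \<Longrightarrow> j \<le> k \<Longrightarrow> e \<notin> set (tags (fs!j))"
  using sd unfolding sks_deriv_def Let_def by auto

lemma vinfo: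
  assumes "k < length st" "step_info (st!k) = Some (c,u,l)"
  shows "\<exists>C r r'. fs!k = plug C r \<and> fs!Suc k = plug C r' \<and> rule_inst bar r r' (Some (c,u,l)) \<and> tags r = u \<and> tags r' = l"
proof -
  obtain C r r' v where "st!k = (C,r,r',v)" "fs!k = plug C r" "fs!Suc k = plug C r'" "rule_inst bar r r' v"
    using ST[OF assms(1)] by blast
  moreover have "v = Some (c,u,l)" using assms(2) calculation(1) by (simp add: step_info_def)
  ultimately show ?thesis using rule_some by blast
qed

lemma u_in: "k < length st \<Longrightarrow> step_info (st!k) = Some (c,u,l) \<Longrightarrow> e \<in> set u \<Longrightarrow> e \<in> set (tags (fs!k))"
  using vinfo[of k c u l] by (auto simp: tags_def occs_plug)

lemma up_lo_order: "up_rel (fs,st) e (V a) \<Longrightarrow> lo_rel (fs,st) e (V b) \<Longrightarrow> a < b"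
  unfolding up_rel_def lo_rel_def
  by (auto dest: u_in FR[where j=b] simp: not_less[symmetric])

lemma step_sub:
  assumes "k < length st"
  shows "set (tags (fs!Suc k)) \<subseteq> set (tags (fs!k)) \<union> (case step_info (st!k) of None \<Rightarrow> {} | Some (c,u,l) \<Rightarrow> set l)"
proof -
  obtain C r r' v where s: "st!k = (C,r,r',v)" "fs!k = plug C r" "fs!Suc k = plug C r'" "rule_inst bar r r' v"
    using ST[OF assms(1)] by blast
  show ?thesis
  proof (cases v)
    case None
    then have "set (occs r') = set (occs r)" using rule_none s(4) by (metis set_mset_mset)
    then show ?thesis using s by (auto simp: tags_def occs_plug)
  next
    case (Some a)
    then obtain c u l where "v = Some (c,u,l)" by (cases a) auto
    then show ?thesis using s rule_some[of bar r r' c u l] by (auto simp: tags_def occs_plug step_info_def)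
  qed
qed

lemma consumed_gone:
  assumes m: "m < length st" "step_info (st!m) = Some (c,u,l)" "e \<in> set u"
  shows "m < j \<Longrightarrow> j < length fs \<Longrightarrow> e \<notin> set (tags (fs!j))"
proof (induction j)
  case 0 then show ?case by simp
next
  case (Suc j)
  have ein: "e \<in> set (tags (fs!m))" using u_in m by blast
  show ?case
  proof (cases "j = m")
    case True
    obtain C r r' where v: "fs!m = plug C r" "fs!Suc m = plug C r'" "tags r = u" "tags r' = l"
      using vinfo[OF m(1,2)] by blast
    have d: "distinct (tags (fs!m))" using DI m(1) L by simp
    have "e \<notin> set l" using FR[OF m(1,2)] ein by blast
    have d': "distinct (map snd (cl C) @ tags r @ map snd (cr C))" using d v(1) by (simp add: tags_def occs_plug)
    then have "e \<notin> set (map snd (cl C))" "e \<notin> set (map snd (cr C))" using m(3) v(3) by auto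
    moreover have "tags (fs!Suc m) = map snd (cl C) @ l @ map snd (cr C)" using v(2,4) by (simp add: tags_def occs_plug)
    ultimately show ?thesis using True \<open>e \<notin> set l\<close> by simp
  next
    case False
    then have "m < j" "j < length st" using Suc.prems L by auto
    then have ih: "e \<notin> set (tags (fs!j))" using Suc by auto
    have "e \<notin> (case step_info (st!j) of None \<Rightarrow> {} | Some (c,u,l) \<Rightarrow> set l)"
      using FR[OF \<open>j < length st\<close>] ein \<open>m < j\<close> by (auto split: option.splits)
    then show ?thesis using step_sub[OF \<open>j < length st\<close>] ih by blast
  qed
qed

lemma lo_survivor: "s \<in> set (tags (last fs)) \<Longrightarrow> lo_rel (fs,st) s \<nu> \<Longrightarrow> \<nu> = Bot"
proof -
  assume s: "s \<in> set (tags (last fs))" and lo: "lo_rel (fs,st) s \<nu>"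
  have lst: "last fs = fs ! length st" using L by (metis diff_Suc_1 last_conv_nth length_0_conv nat.distinct(1))
  show "\<nu> = Bot"
  proof (rule ccontr)
    assume "\<nu> \<noteq> Bot"
    then obtain m c u l where "m < length st" "step_info (st!m) = Some (c,u,l)" "s \<in> set u"
      using lo unfolding lo_rel_def by auto
    then show False using consumed_gone[of m c u l s "length st"] s lst L by simp
  qed
qed

lemma dpath_mid: "dpath D \<nu> \<nu>' es \<Longrightarrow> Suc i < length es \<Longrightarrow> \<exists>m. lo_rel D (es!i) (V m) \<and> up_rel D (es!Suc i) (V m)"
  unfolding dpath_def
  apply (drule conjunct2, drule conjunct2, drule conjunct2)
  apply (erule allE[of _ i])
  apply clarsimp
  subgoal for \<mu> by (cases \<mu>) (auto simp: up_rel_def lo_rel_def)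
  done

lemma dpath_order: "dpath (fs,st) (V a) \<nu> es \<Longrightarrow> i < length es \<Longrightarrow> \<exists>c\<ge>a. up_rel (fs,st) (es!i) (V c)"
proof (induction i)
  case 0 then show ?case by (auto simp: dpath_def hd_conv_nth)
next
  case (Suc i)
  then obtain c where c: "c \<ge> a" "up_rel (fs,st) (es!i) (V c)" by auto
  obtain m where m: "lo_rel (fs,st) (es!i) (V m)" "up_rel (fs,st) (es!Suc i) (V m)"
    using dpath_mid Suc.prems by blast
  have "c < m" using up_lo_order c(2) m(1) by blast
  then show ?case using c m by (auto intro: exI[of _ m])
qed

lemma dpath_VV: "dpath (fs,st) (V a) (V b) es \<Longrightarrow> a < b"
proof -
  assume d: "dpath (fs,st) (V a) (V b) es"
  then have ne: "es \<noteq> []" by (simp add: dpath_def)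
  then obtain c where "c \<ge> a" "up_rel (fs,st) (es!(length es - 1)) (V c)"
    using dpath_order[OF d, of "length es - 1"] by auto
  moreover have "lo_rel (fs,st) (es!(length es - 1)) (V b)" using d ne by (simp add: dpath_def last_conv_nth)
  ultimately show "a < b" using up_lo_order by fastforce
qed

lemma dpath_surv: "dpath (fs,st) \<nu>0 \<nu> es \<Longrightarrow> hd es \<in> set (tags (last fs)) \<Longrightarrow> \<nu> = Bot"
proof -
  assume d: "dpath (fs,st) \<nu>0 \<nu> es" and h: "hd es \<in> set (tags (last fs))"
  have ne: "es \<noteq> []" using d by (simp add: dpath_def)
  show "\<nu> = Bot"
  proof (cases "length es = 1")
    case True
    then have "last es = hd es" using ne by (cases es) auto
    then show ?thesis using d h lo_survivor by (auto simp: dpath_def)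
  next
    case False
    then have "Suc 0 < length es" using ne by (cases es) auto
    then obtain m where m: "lo_rel (fs,st) (es!0) (V m)" using dpath_mid[OF d] by blast
    have "es!0 \<in> set (tags (last fs))" using h ne by (simp add: hd_conv_nth)
    then have "V m = Bot" using lo_survivor m by blast
    then show ?thesis by simp
  qed
qed

lemma occs_par_r:
  assumes "k < length st" "step_info (st!k) = Some (c,u,l)"
  shows "\<exists>r r'. rule_inst bar r r' (Some (c,u,l)) \<and> tags r = u \<and> tags r' = l \<and>
     (\<forall>(a,e)\<in>set (occs r). even e = sgn a) \<and> (\<forall>(a,e)\<in>set (occs r'). even e = sgn a)"
proof -
  obtain C r r' where v: "fs!k = plug C r" "fs!Suc k = plug C r'" "rule_inst bar r r' (Some (c,u,l))" "tags r = u" "tags r' = l"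
    using vinfo[OF assms] by blast
  have "k < length fs" "Suc k < length fs" using assms L by auto
  moreover have "set (occs r) \<subseteq> set (occs (fs!k))" "set (occs r') \<subseteq> set (occs (fs!Suc k))"
    using v(1,2) by (auto simp: occs_plug)
  ultimately have "\<forall>(a,e)\<in>set (occs r). even e = sgn a" "\<forall>(a,e)\<in>set (occs r'). even e = sgn a"
    using par by blast+
  then show ?thesis using v by blast
qed

lemma mid_parity: "lo_rel (fs,st) e (V m) \<Longrightarrow> up_rel (fs,st) e' (V m) \<Longrightarrow> even e = even e'"
  unfolding lo_rel_def up_rel_def
  apply clarsimp
  subgoal for c u l
    using occs_par_r[of m c u l]
    apply clarsimp
    apply (erule rule_inst.cases)
    apply (auto simp: tags_def)
    done
  done

lemma dpath_parity: "dpath (fs,st) \<nu> \<nu>' es \<Longrightarrow> i < length es \<Longrightarrow> even (es!i) = even (hd es)"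
proof (induction i)
  case 0 then show ?case by (auto simp: dpath_def hd_conv_nth)
next
  case (Suc i)
  obtain m where m: "lo_rel (fs,st) (es!i) (V m)" "up_rel (fs,st) (es!Suc i) (V m)"
    using dpath_mid Suc.prems by blast
  then show ?case using mid_parity Suc by fastforce
qed

lemma cut_info: "k < length st \<Longrightarrow> step_info (st!k) = Some (Cut,u,l) \<Longrightarrow>
   l = [] \<and> (\<exists>i j. u = [i,j] \<and> even i \<noteq> even j)"
  using occs_par_r[of k Cut u l]
  apply clarsimp
  apply (erule rule_inst.cases)
  apply (auto simp: tags_def sg)
  done

lemma int_info: "k < length st \<Longrightarrow> step_info (st!k) = Some (Interaction,u,l) \<Longrightarrow>
   u = [] \<and> (\<exists>i j. l = [i,j])"
  using occs_par_r[of k Interaction u l]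
  apply clarsimp
  apply (erule rule_inst.cases)
  apply (auto simp: tags_def)
  done

lemma two_lower: "k < length st \<Longrightarrow> step_info (st!k) = Some (c,u,l) \<Longrightarrow> e1 \<in> set l \<Longrightarrow> e2 \<in> set l \<Longrightarrow> e1 \<noteq> e2
   \<Longrightarrow> (c = Interaction \<and> set l = {e1,e2}) \<or> (c = Cocontraction \<and> even e1 = even e2)"
  using occs_par_r[of k c u l]
  apply clarsimp
  apply (erule rule_inst.cases)
  apply (auto simp: tags_def)
  done


definition is_cut :: "nat \<Rightarrow> bool" where
  "is_cut k \<longleftrightarrow> k < length st \<and> (\<exists>u l. step_info (st!k) = Some (Cut,u,l))"

lemma up_V: "up_rel (fs,st) e (V k) \<Longrightarrow> step_info (st!k) = Some (c,u,l) \<Longrightarrow> e \<in> set l"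
  by (auto simp: up_rel_def)
lemma lo_V: "lo_rel (fs,st) e (V k) \<Longrightarrow> step_info (st!k) = Some (c,u,l) \<Longrightarrow> e \<in> set u"
  by (auto simp: lo_rel_def)

lemma dp: "dpath D \<nu> \<nu>' es \<Longrightarrow> es \<noteq> [] \<and> up_rel D (hd es) \<nu> \<and> lo_rel D (last es) \<nu>'"
  by (simp add: dpath_def)

lemma shape:
  assumes "aipath (fs,st) \<nu> \<nu>' es"
  shows "\<nu> = Bot \<or> \<nu>' = Bot \<or> fpath (fs,st) \<nu> \<nu>' es \<or>
    (\<exists>c xs ys. es = xs@ys \<and> is_cut c \<and> dpath (fs,st) \<nu> (V c) xs \<and> dpath (fs,st) \<nu>' (V c) (rev ys) \<and> last xs \<noteq> hd ys)"
  using assms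
proof (induction rule: aipath.induct)
  case (base \<nu> \<nu>' es) then show ?case by blast
next
  case (join \<nu> k xs \<nu>' ys)
  show ?case
  proof (cases "\<nu> = Bot \<or> \<nu>' = Bot")
    case True then show ?thesis by blast
  next
    case False
    then have nb: "\<nu> \<noteq> Bot" "\<nu>' \<noteq> Bot" by auto
    obtain c u l where k: "k < length st" "step_info (st!k) = Some (c,u,l)"
      using join.hyps(4) by (auto simp: is_vertex_def)
    have ck: "c \<in> {Interaction, Cut}" using join.hyps(5) k by (simp add: vertex_kind_def)
    have IHx: "fpath (fs,st) \<nu> (V k) xs \<or> (\<exists>c xs1 xs2. xs = xs1@xs2 \<and> is_cut c \<and> dpath (fs,st) \<nu> (V c) xs1 \<and> dpath (fs,st) (V k) (V c) (rev xs2) \<and> last xs1 \<noteq> hd xs2)"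
      using join.IH(1) nb by auto
    have IHy: "fpath (fs,st) (V k) \<nu>' ys \<or> (\<exists>c ys1 ys2. ys = ys1@ys2 \<and> is_cut c \<and> dpath (fs,st) (V k) (V c) ys1 \<and> dpath (fs,st) \<nu>' (V c) (rev ys2) \<and> last ys1 \<noteq> hd ys2)"
      using join.IH(2) nb by auto
    show ?thesis
    proof (cases "c = Cut")
      case True
      note ci = cut_info[OF k(1) k(2)[unfolded True]]
      have "dpath (fs,st) \<nu> (V k) xs"
      proof -
        { assume "dpath (fs,st) (V k) \<nu> (rev xs)"
          then have "up_rel (fs,st) (hd (rev xs)) (V k)" using dp by blast
          then have False using up_V[OF _ k(2)] ci by auto }
        moreover
        { fix c' xs1 xs2 assume "xs = xs1@xs2" "dpath (fs,st) (V k) (V c') (rev xs2)"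
          then have "up_rel (fs,st) (hd (rev xs2)) (V k)" using dp by blast
          then have False using up_V[OF _ k(2)] ci by auto }
        ultimately show ?thesis using IHx unfolding fpath_def by blast
      qed
      moreover have "dpath (fs,st) \<nu>' (V k) (rev ys)"
      proof -
        { assume "dpath (fs,st) (V k) \<nu>' ys"
          then have "up_rel (fs,st) (hd ys) (V k)" using dp by blast
          then have False using up_V[OF _ k(2)] ci by auto }
        moreover
        { fix c' ys1 ys2 assume "ys = ys1@ys2" "dpath (fs,st) (V k) (V c') ys1"
          then have "up_rel (fs,st) (hd ys1) (V k)" using dp by blast
          then have False using up_V[OF _ k(2)] ci by auto }
        ultimately show ?thesis using IHy unfolding fpath_def by (metis rev_rev_ident)
      qed
      moreover have "is_cut k" using k True by (simp add: is_cut_def)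
      ultimately show ?thesis using join.hyps(3) by blast
    next
      case False
      then have ci: "c = Interaction" using ck by simp
      note ii = int_info[OF k(1) k(2)[unfolded ci]]
      obtain s where s: "s \<in> set l" "s \<in> set (tags (last fs))" using q1[OF k(1) k(2)[unfolded ci]] by blast
      have x: "last xs \<in> set l \<and> last xs \<noteq> s"
      proof -
        { assume "dpath (fs,st) \<nu> (V k) xs"
          then have "lo_rel (fs,st) (last xs) (V k)" using dp by blast
          then have False using lo_V k ii by fastforce }
        moreover
        { assume d: "dpath (fs,st) (V k) \<nu> (rev xs)"
          then have ne: "xs \<noteq> []" using dp by fastforce
          have "up_rel (fs,st) (hd (rev xs)) (V k)" using dp d by blast
          then have "last xs \<in> set l" using up_V k ne by (simp add: hd_rev)
          moreover have "last xs \<noteq> s" using dpath_surv[OF d] s(2) nb ne by (auto simp: hd_rev)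
          ultimately have ?thesis by blast }
        moreover
        { fix c' xs1 xs2 assume xx: "xs = xs1@xs2" "dpath (fs,st) (V k) (V c') (rev xs2)"
          then have ne: "xs2 \<noteq> []" using dp by fastforce
          have "up_rel (fs,st) (hd (rev xs2)) (V k)" using dp xx by blast
          then have "last xs \<in> set l" using up_V k ne xx by (simp add: hd_rev)
          moreover have "last xs \<noteq> s" using dpath_surv[OF xx(2)] s(2) ne xx by (auto simp: hd_rev)
          ultimately have ?thesis by blast }
        ultimately show ?thesis using IHx unfolding fpath_def by blast
      qed
      have y: "hd ys \<in> set l \<and> hd ys \<noteq> s"
      proof -
        { assume "dpath (fs,st) \<nu>' (V k) (rev ys)"
          then have "lo_rel (fs,st) (last (rev ys)) (V k)" using dp by blast
          then have False using lo_V k ii by fastforce }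
        moreover
        { assume d: "dpath (fs,st) (V k) \<nu>' ys"
          have "up_rel (fs,st) (hd ys) (V k)" using dp d by blast
          then have "hd ys \<in> set l" using up_V k by blast
          moreover have "hd ys \<noteq> s" using dpath_surv[OF d] s(2) nb by auto
          ultimately have ?thesis by blast }
        moreover
        { fix c' ys1 ys2 assume yy: "ys = ys1@ys2" "dpath (fs,st) (V k) (V c') ys1"
          then have ne: "ys1 \<noteq> []" using dp by fastforce
          have "up_rel (fs,st) (hd ys1) (V k)" using dp yy by blast
          then have "hd ys \<in> set l" using up_V k ne yy by simp
          moreover have "hd ys \<noteq> s" using dpath_surv[OF yy(2)] s(2) ne yy by auto
          ultimately have ?thesis by blast }
        ultimately show ?thesis using IHy unfolding fpath_def by (metis rev_rev_ident)
      qed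
      then have False using x s(1) ii join.hyps(3) by auto
      then show ?thesis ..
    qed
  qed
qed

theorem cycle_free: "cycle_free (fs,st)"
  unfolding cycle_free_def
proof (clarify)
  fix k es
  assume v: "is_vertex (fs,st) k" and a: "aipath (fs,st) (V k) (V k) es" and dis: "distinct es"
  have sh: "fpath (fs,st) (V k) (V k) es \<or> (\<exists>c xs ys. es = xs@ys \<and> is_cut c \<and> dpath (fs,st) (V k) (V c) xs \<and> dpath (fs,st) (V k) (V c) (rev ys) \<and> last xs \<noteq> hd ys)"
    using shape[OF a] by auto
  show False
  proof (cases "fpath (fs,st) (V k) (V k) es")
    case True then show False unfolding fpath_def using dpath_VV by blast
  next
    case False
    then obtain c xs ys where c: "es = xs@ys" "is_cut c" "dpath (fs,st) (V k) (V c) xs" "dpath (fs,st) (V k) (V c) (rev ys)" "last xs \<noteq> hd ys"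
      using sh by blast
    obtain u' l' where cc: "c < length st" "step_info (st!c) = Some (Cut,u',l')" using c(2) by (auto simp: is_cut_def)
    obtain ck uk lk where kk: "k < length st" "step_info (st!k) = Some (ck,uk,lk)" using v by (auto simp: is_vertex_def)
    have nx: "xs \<noteq> []" and ny: "ys \<noteq> []" using c(3,4) dp by fastforce+
    have e1: "hd xs \<in> set lk" using dp[OF c(3)] up_V kk by blast
    have e2: "last ys \<in> set lk" using dp[OF c(4)] up_V kk ny by (fastforce simp: hd_rev)
    have neq: "hd xs \<noteq> last ys" using dis c(1) nx ny
      by (metis append_butlast_last_id distinct_append hd_append2 hd_in_set disjoint_iff last_in_set list.set_sel(1) distinct.simps(2) append_Cons hd_Cons_tl)
    have f1: "last xs \<in> set u'" using dp[OF c(3)] lo_V cc by blast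
    have f2: "hd ys \<in> set u'" using dp[OF c(4)] lo_V cc ny by (fastforce simp: last_rev)
    obtain i j where ij: "u' = [i,j]" "even i \<noteq> even j" using cut_info[OF cc] by blast
    have pf: "even (last xs) \<noteq> even (hd ys)" using f1 f2 c(5) ij by auto
    have p1: "even (last xs) = even (hd xs)" using dpath_parity[OF c(3), of "length xs - 1"] nx by (simp add: last_conv_nth)
    have r1: "(rev ys)!(length ys - 1) = hd ys" using ny by (simp add: rev_nth hd_conv_nth)
    have p2: "even (hd ys) = even (last ys)" using dpath_parity[OF c(4), of "length ys - 1"] ny r1
      by (simp add: hd_rev)
    show False
    proof (cases "ck = Interaction")
      case True
      obtain s where s: "s \<in> set lk" "s \<in> set (tags (last fs))" using q1[OF kk(1) kk(2)[unfolded True]] by blast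
      have "set lk = {hd xs, last ys}" using two_lower[OF kk e1 e2 neq] True by auto
      then have "s = hd xs \<or> s = last ys" using s by auto
      then show False
      proof
        assume "s = hd xs" then show False using dpath_surv[OF c(3)] s by simp
      next
        assume "s = last ys" then show False using dpath_surv[OF c(4)] s ny by (simp add: hd_rev)
      qed
    next
      case False
      then have "even (hd xs) = even (last ys)" using two_lower[OF kk e1 e2 neq] by auto
      then show False using pf p1 p2 by simp
    qed
  qed
qed
end


fun cc :: "'b ctx \<Rightarrow> 'b ctx \<Rightarrow> 'b ctx" where
  "cc Hole D = D" | "cc (COrL C b) D = COrL (cc C D) b" | "cc (COrR a C) D = COrR a (cc C D)"
| "cc (CAndL C b) D = CAndL (cc C D) b" | "cc (CAndR a C) D = CAndR a (cc C D)"

lemma plug_cc: "plug (cc C D) x = plug C (plug D x)"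
  by (induction C) auto

definition tlt :: "'a tfm \<Rightarrow> nat \<Rightarrow> bool" where
  "tlt \<phi> n \<longleftrightarrow> (\<forall>e\<in>set (tags \<phi>). e < n)"

definition created :: "vinfo option \<Rightarrow> nat set" where
  "created v = (case v of None \<Rightarrow> {} | Some (c,u,l) \<Rightarrow> set l)"

definition intok :: "nat set \<Rightarrow> vinfo option \<Rightarrow> bool" where
  "intok S v \<longleftrightarrow> (\<forall>u l. v = Some (Interaction,u,l) \<longrightarrow> (\<exists>s\<in>set l. s \<in> S))"

lemma tags_plug: "tags (plug C x) = map snd (cl C) @ tags x @ map snd (cr C)"
  by (simp add: tags_def occs_plug)

lemma tlt_plug: "tlt (plug C x) n \<longleftrightarrow> (\<forall>p\<in>set (cl C) \<union> set (cr C). snd p < n) \<and> tlt x n"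
  by (auto simp: tlt_def tags_plug)

lemma tlt_repl: "tlt (plug C x) n \<Longrightarrow> tlt y m \<Longrightarrow> n \<le> m \<Longrightarrow> tlt (plug C y) m"
proof -
  assume a: "tlt (plug C x) n" "tlt y m" "n \<le> m"
  have "\<forall>p\<in>set (cl C) \<union> set (cr C). snd p < n" using a(1) by (simp add: tlt_plug)
  then have "\<forall>p\<in>set (cl C) \<union> set (cr C). snd p < m" using a(3) by (meson less_le_trans)
  then show ?thesis using a(2) by (simp add: tlt_plug)
qed

locale cons =
  fixes bar :: "'a \<Rightarrow> 'a" and sgn :: "'a \<Rightarrow> bool"
  assumes bb: "\<And>a. bar (bar a) = a" and bn: "\<And>a. bar a \<noteq> a"
    and sg: "\<And>a. sgn (bar a) = (\<not> sgn a)"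
begin

definition ok :: "'a tfm \<Rightarrow> bool" where
  "ok \<phi> \<longleftrightarrow> distinct (tags \<phi>) \<and> (\<forall>(a,e)\<in>set (occs \<phi>). even e = sgn a)"

definition onestep :: "'a tfm \<Rightarrow> 'a tfm \<Rightarrow> vinfo option \<Rightarrow> bool" where
  "onestep \<phi> \<phi>' v \<longleftrightarrow> (\<exists>C r r'. \<phi> = plug C r \<and> \<phi>' = plug C r' \<and> rule_inst bar r r' v)"

inductive reach :: "nat set \<Rightarrow> nat \<Rightarrow> 'a tfm \<Rightarrow> 'a tfm \<Rightarrow> nat \<Rightarrow> bool" for S where
  refl: "ok \<phi> \<Longrightarrow> tlt \<phi> n \<Longrightarrow> n \<le> m \<Longrightarrow> reach S n \<phi> \<phi> m"
| step: "ok \<phi> \<Longrightarrow> tlt \<phi> n \<Longrightarrow> onestep \<phi> \<phi>' v \<Longrightarrow> created v \<subseteq> {n..} \<Longrightarrow> intok S v \<Longrightarrow> n \<le> n'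
    \<Longrightarrow> reach S n' \<phi>' \<psi> m \<Longrightarrow> reach S n \<phi> \<psi> m"

lemma tlt_mono: "tlt \<phi> n \<Longrightarrow> n \<le> m \<Longrightarrow> tlt \<phi> m"
  by (auto simp: tlt_def)

lemma intok_mono: "intok S v \<Longrightarrow> S \<subseteq> S' \<Longrightarrow> intok S' v"
  unfolding intok_def by blast

lemma reach_props: "reach S n \<phi> \<psi> m \<Longrightarrow> ok \<phi> \<and> tlt \<phi> n \<and> ok \<psi> \<and> tlt \<psi> m \<and> n \<le> m"
  by (induction rule: reach.induct) (auto intro: tlt_mono)

lemma reach_lower: "reach S m \<chi> \<psi> k \<Longrightarrow> tlt \<chi> n \<Longrightarrow> n \<le> m \<Longrightarrow> reach S n \<chi> \<psi> k"
proof (erule reach.cases)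
  assume "tlt \<chi> n" "n \<le> m"
  fix \<phi> n' m' assume "m = n'" "\<chi> = \<phi>" "\<psi> = \<phi>" "k = m'" "ok \<phi>" "tlt \<phi> n'" "n' \<le> m'"
  then show ?thesis using \<open>tlt \<chi> n\<close> \<open>n \<le> m\<close> by (auto intro: reach.refl)
next
  assume a: "tlt \<chi> n" "n \<le> m"
  fix \<phi> n1 \<phi>' v n' \<psi>' m'
  assume "m = n1" "\<chi> = \<phi>" "\<psi> = \<psi>'" "k = m'" "ok \<phi>" "tlt \<phi> n1" "onestep \<phi> \<phi>' v"
    "created v \<subseteq> {n1..}" "intok S v" "n1 \<le> n'" "reach S n' \<phi>' \<psi>' m'"
  moreover have "created v \<subseteq> {n..}" using calculation a by auto
  moreover have "n \<le> n'" using calculation a by auto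
  ultimately show ?thesis using a by (blast intro: reach.step)
qed

lemma reach_trans: "reach S n \<phi> \<chi> m \<Longrightarrow> reach S m \<chi> \<psi> k \<Longrightarrow> reach S n \<phi> \<psi> k"
proof (induction rule: reach.induct)
  case (refl \<phi> n m) then show ?case using reach_lower by blast
next
  case (step \<phi> n \<phi>' v n' \<psi>' m) then show ?case by (blast intro: reach.step)
qed

lemma reach_mono: "reach S n \<phi> \<psi> m \<Longrightarrow> S \<subseteq> S' \<Longrightarrow> reach S' n \<phi> \<psi> m"
  by (induction rule: reach.induct) (auto intro: reach.intros intok_mono)

lemma onestep_tags: "onestep \<phi> \<phi>' v \<Longrightarrow> set (tags \<phi>') \<subseteq> set (tags \<phi>) \<union> created v"
proof -
  assume "onestep \<phi> \<phi>' v"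
  then obtain C r r' where s: "\<phi> = plug C r" "\<phi>' = plug C r'" "rule_inst bar r r' v" by (auto simp: onestep_def)
  show ?thesis
  proof (cases v)
    case None
    then have "set (occs r') = set (occs r)" using rule_none s(3) by (metis set_mset_mset)
    then show ?thesis using s by (auto simp: tags_def occs_plug)
  next
    case (Some a)
    then obtain c u l where "v = Some (c,u,l)" by (cases a) auto
    then show ?thesis using s rule_some[of bar r r' c u l] by (auto simp: tags_plug created_def)
  qed
qed

lemma ok_plug: "ok (plug C x) \<longleftrightarrow> distinct (map snd (cl C) @ tags x @ map snd (cr C)) \<and>
   (\<forall>(a,e)\<in>set (cl C) \<union> set (occs x) \<union> set (cr C). even e = sgn a)"
  by (auto simp: ok_def tags_plug occs_plug)

lemma ok_sub: "ok (plug C x) \<Longrightarrow> ok x"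
  by (auto simp: ok_def tags_plug occs_plug)

lemma tlt_sub: "tlt (plug C x) n \<Longrightarrow> tlt x n"
  by (auto simp: tlt_plug)

lemma ok_replace:
  assumes "ok (plug C x)" "tlt (plug C x) n" "ok y" "\<forall>e\<in>set (tags y). e \<in> set (tags x) \<or> n \<le> e"
  shows "ok (plug C y)"
proof -
  have d: "distinct (map snd (cl C) @ tags x @ map snd (cr C))" and p: "\<forall>(a,e)\<in>set (cl C) \<union> set (occs x) \<union> set (cr C). even e = sgn a"
    using assms(1) by (auto simp: ok_plug)
  have lt: "\<forall>p\<in>set (cl C) \<union> set (cr C). snd p < n" using assms(2) by (simp add: tlt_plug)
  have "\<forall>e\<in>set (tags y). e \<notin> snd ` set (cl C) \<and> e \<notin> snd ` set (cr C)"
  proof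
    fix e assume "e \<in> set (tags y)"
    then have "e \<in> set (tags x) \<or> n \<le> e" using assms(4) by blast
    then show "e \<notin> snd ` set (cl C) \<and> e \<notin> snd ` set (cr C)"
    proof
      assume "e \<in> set (tags x)" then show ?thesis using d by auto
    next
      assume "n \<le> e"
      have "e \<notin> snd ` set (cl C) \<union> snd ` set (cr C)"
      proof
        assume "e \<in> snd ` set (cl C) \<union> snd ` set (cr C)"
        then obtain p where "p \<in> set (cl C) \<union> set (cr C)" "e = snd p" by blast
        then show False using lt \<open>n \<le> e\<close> by (meson leD)
      qed
      then show ?thesis by blast
    qed
  qed
  then show ?thesis using d p assms(3) unfolding ok_plug by (auto simp: ok_def)
qed

lemma reach_lift: "reach S n \<chi> \<chi>' m \<Longrightarrow> ok (plug C \<chi>) \<Longrightarrow> tlt (plug C \<chi>) n \<Longrightarrow> reach S n (plug C \<chi>) (plug C \<chi>') m"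
proof (induction arbitrary: C rule: reach.induct)
  case (refl \<phi> n m)
  then show ?case by (auto intro: reach.refl)
next
  case (step \<phi> n \<phi>' v n' \<psi> m)
  obtain C0 r r' where "\<phi> = plug C0 r" "\<phi>' = plug C0 r'" "rule_inst bar r r' v"
    using step.hyps(3) by (auto simp: onestep_def)
  then have os: "onestep (plug C \<phi>) (plug C \<phi>') v"
    unfolding onestep_def by (metis plug_cc)
  have pr: "ok \<phi>' \<and> tlt \<phi>' n'" using reach_props[OF step.hyps(7)] by blast
  have okp: "ok (plug C \<phi>')"
    using ok_replace[OF step.prems(1) step.prems(2)] pr onestep_tags[OF step.hyps(3)] step.hyps(4) by auto
  have "\<forall>p\<in>set (cl C) \<union> set (cr C). snd p < n" using step.prems(2) by (simp add: tlt_plug)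
  then have "\<forall>p\<in>set (cl C) \<union> set (cr C). snd p < n'" using step.hyps(6) by (meson less_le_trans)
  then have tl: "tlt (plug C \<phi>') n'" using pr by (simp add: tlt_plug)
  show ?case
    using reach.step[OF step.prems(1) step.prems(2) os step.hyps(4) step.hyps(5) step.hyps(6) step.IH[OF okp tl]] .
qed

lemma ext_sub: "reach S n0 \<phi> (plug C \<chi>) n \<Longrightarrow> reach S n \<chi> \<chi>' m \<Longrightarrow> reach S n0 \<phi> (plug C \<chi>') m"
  using reach_trans reach_lift reach_props by blast

lemma ext_step:
  assumes "reach S n0 \<phi> (plug C x) n" "rule_inst bar x y v" "created v \<subseteq> {n..}" "intok S v"
     "ok (plug C y)" "tlt (plug C y) m" "n \<le> m"
  shows "reach S n0 \<phi> (plug C y) m"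
proof -
  have "ok (plug C x)" "tlt (plug C x) n" using reach_props[OF assms(1)] by auto
  moreover have "onestep (plug C x) (plug C y) v" using assms(2) by (auto simp: onestep_def)
  ultimately have "reach S n (plug C x) (plug C y) m"
    using assms(3-7) by (blast intro: reach.intros)
  then show ?thesis using reach_trans assms(1) by blast
qed

lemma mset_distinct: "mset xs = mset ys \<Longrightarrow> distinct (map f xs) = distinct (map f ys)"
  by (metis mset_eq_imp_distinct_iff mset_map)

lemma ext_none:
  assumes "reach S n0 \<phi> (plug C x) n" "rule_inst bar x y None"
  shows "reach S n0 \<phi> (plug C y) n"
proof -
  have m: "mset (occs (plug C y)) = mset (occs (plug C x))" using rule_none[OF assms(2)] by (simp add: occs_plug)
  then have s: "set (occs (plug C y)) = set (occs (plug C x))" by (metis set_mset_mset)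
  have "ok (plug C x)" "tlt (plug C x) n" using reach_props[OF assms(1)] by auto
  then have "ok (plug C y)" "tlt (plug C y) n"
    using m s mset_distinct[OF m, of snd] by (auto simp: ok_def tlt_def tags_def)
  then show ?thesis using ext_step[OF assms(1) assms(2)] by (auto simp: created_def intok_def)
qed

lemma ext_eq: "reach S n0 \<phi> (plug C x) n \<Longrightarrow> eq_base x y \<or> eq_base y x \<Longrightarrow> reach S n0 \<phi> (plug C y) n"
  using ext_none rule_inst.eq_l rule_inst.eq_r by blast

lemma ext_sw: "reach S n0 \<phi> (plug C (And x (Or y z))) n \<Longrightarrow> reach S n0 \<phi> (plug C (Or (And x y) z)) n"
  using ext_none rule_inst.switch by blast

lemma ext_med: "reach S n0 \<phi> (plug C (Or (And x y) (And z w))) n \<Longrightarrow> reach S n0 \<phi> (plug C (And (Or x z) (Or y w))) n"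
  using ext_none rule_inst.medial by blast

lemma start: "ok \<phi> \<Longrightarrow> tlt \<phi> n \<Longrightarrow> reach S n \<phi> \<phi> n"
  by (rule reach.refl) auto

definition ft :: "nat \<Rightarrow> 'a \<Rightarrow> nat" where
  "ft n a = 2*n + (if sgn a then 0 else 1)"

lemma ft_par: "even (ft n a) = sgn a" by (simp add: ft_def)
lemma ft_ge: "n \<le> ft n a" "ft n a < 2*n+2" by (auto simp: ft_def)

lemma ext_cow: "reach S n0 \<phi> (plug C (At (a,i))) n \<Longrightarrow> reach S n0 \<phi> (plug C TT) n"
proof -
  assume r: "reach S n0 \<phi> (plug C (At (a,i))) n"
  have o: "ok (plug C (At (a,i)))" "tlt (plug C (At (a,i))) n" using reach_props[OF r] by auto
  have t: "tlt TT n" by (simp add: tlt_def tags_def)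
  have "ok (plug C TT)" by (rule ok_replace[OF o]) (auto simp: ok_def tags_def)
  moreover have "tlt (plug C TT) n" using tlt_repl[OF o(2) t] by simp
  ultimately show ?thesis using ext_step[OF r rule_inst.aw_up] by (auto simp: created_def intok_def)
qed

lemma ext_cut: "reach S n0 \<phi> (plug C (And (At (a,i)) (At (bar a,j)))) n \<Longrightarrow> reach S n0 \<phi> (plug C FF) n"
proof -
  assume r: "reach S n0 \<phi> (plug C (And (At (a,i)) (At (bar a,j)))) n"
  have o: "ok (plug C (And (At (a,i)) (At (bar a,j))))" "tlt (plug C (And (At (a,i)) (At (bar a,j)))) n" using reach_props[OF r] by auto
  have t: "tlt FF n" by (simp add: tlt_def tags_def)
  have "ok (plug C FF)" by (rule ok_replace[OF o]) (auto simp: ok_def tags_def)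
  moreover have "tlt (plug C FF) n" using tlt_repl[OF o(2) t] by simp
  ultimately show ?thesis using ext_step[OF r rule_inst.ai_up] by (auto simp: created_def intok_def)
qed

lemma ext_wk: "reach S n0 \<phi> (plug C FF) n \<Longrightarrow> reach S n0 \<phi> (plug C (At (a, ft n a))) (2*n+2)"
proof -
  assume r: "reach S n0 \<phi> (plug C FF) n"
  have o: "ok (plug C FF)" "tlt (plug C FF) n" using reach_props[OF r] by auto
  have "ok (plug C (At (a, ft n a)))"
    by (rule ok_replace[OF o]) (auto simp: ok_def tags_def ft_par ft_ge)
  moreover have "tlt (plug C (At (a, ft n a))) (2*n+2)" using ft_ge[of n a]
    by (intro tlt_repl[OF o(2)]) (auto simp: tlt_def tags_def)
  ultimately show ?thesis using ext_step[OF r rule_inst.aw_down] ft_ge[of n a] by (auto simp: created_def intok_def)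
qed

lemma ext_coc: "reach S n0 \<phi> (plug C (At (a,i))) n \<Longrightarrow>
   reach S n0 \<phi> (plug C (And (At (a, ft n a)) (At (a, ft (Suc n) a)))) (2*n+4)"
proof -
  assume r: "reach S n0 \<phi> (plug C (At (a,i))) n"
  have o: "ok (plug C (At (a,i)))" "tlt (plug C (At (a,i))) n" using reach_props[OF r] by auto
  have d: "ft n a \<noteq> ft (Suc n) a" by (simp add: ft_def)
  have "ok (plug C (And (At (a, ft n a)) (At (a, ft (Suc n) a))))"
    by (rule ok_replace[OF o]) (use d ft_ge[of n a] ft_ge[of "Suc n" a] in \<open>auto simp: ok_def tags_def ft_par\<close>)
  moreover have "tlt (plug C (And (At (a, ft n a)) (At (a, ft (Suc n) a)))) (2*n+4)"
    using ft_ge[of n a] ft_ge[of "Suc n" a] by (intro tlt_repl[OF o(2)]) (auto simp: tlt_def tags_def)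
  ultimately show ?thesis using ext_step[OF r rule_inst.ac_up] ft_ge[of n a] ft_ge[of "Suc n" a]
    by (auto simp: created_def intok_def)
qed

lemma ext_int: "reach S n0 \<phi> (plug C TT) n \<Longrightarrow> ft n a \<in> S \<Longrightarrow>
   reach S n0 \<phi> (plug C (Or (At (a, ft n a)) (At (bar a, ft (Suc n) (bar a))))) (2*n+4)"
proof -
  assume r: "reach S n0 \<phi> (plug C TT) n" and S: "ft n a \<in> S"
  have o: "ok (plug C TT)" "tlt (plug C TT) n" using reach_props[OF r] by auto
  have d: "ft n a \<noteq> ft (Suc n) (bar a)" by (simp add: ft_def)
  have "ok (plug C (Or (At (a, ft n a)) (At (bar a, ft (Suc n) (bar a)))))"
    by (rule ok_replace[OF o]) (use d ft_ge[of n a] ft_ge[of "Suc n" "bar a"] in \<open>auto simp: ok_def tags_def ft_par\<close>)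
  moreover have "tlt (plug C (Or (At (a, ft n a)) (At (bar a, ft (Suc n) (bar a))))) (2*n+4)"
    using ft_ge[of n a] ft_ge[of "Suc n" "bar a"] by (intro tlt_repl[OF o(2)]) (auto simp: tlt_def tags_def)
  ultimately show ?thesis using ext_step[OF r rule_inst.ai_down] ft_ge[of n a] ft_ge[of "Suc n" "bar a"] S
    by (auto simp: created_def intok_def)
qed

end


context cons begin

lemma X_eq: "reach S n0 \<phi> \<psi> n \<Longrightarrow> \<psi> = plug C x \<Longrightarrow> \<psi>' = plug C y \<Longrightarrow> eq_base x y \<or> eq_base y x \<Longrightarrow> reach S n0 \<phi> \<psi>' n"
  using ext_eq by blast
lemma X_sw: "reach S n0 \<phi> \<psi> n \<Longrightarrow> \<psi> = plug C (And x (Or y z)) \<Longrightarrow> \<psi>' = plug C (Or (And x y) z) \<Longrightarrow> reach S n0 \<phi> \<psi>' n"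
  using ext_sw by blast
lemma X_med: "reach S n0 \<phi> \<psi> n \<Longrightarrow> \<psi> = plug C (Or (And x y) (And z w)) \<Longrightarrow> \<psi>' = plug C (And (Or x z) (Or y w)) \<Longrightarrow> reach S n0 \<phi> \<psi>' n"
  using ext_med by blast
lemma X_sub: "reach S n0 \<phi> \<psi> n \<Longrightarrow> \<psi> = plug C \<chi> \<Longrightarrow> reach S n \<chi> \<chi>' m \<Longrightarrow> \<psi>' = plug C \<chi>' \<Longrightarrow> reach S n0 \<phi> \<psi>' m"
  using ext_sub by blast

fun dualf :: "'a fm \<Rightarrow> 'a fm" where
  "dualf FF = TT" | "dualf TT = FF" | "dualf (At a) = At (bar a)"
| "dualf (Or x y) = And (dualf x) (dualf y)" | "dualf (And x y) = Or (dualf x) (dualf y)"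

lemma ok_TT: "ok TT" and tlt_TT: "tlt TT n" by (auto simp: ok_def tlt_def tags_def)

lemma GI: "\<exists>B0 Bc0 m. reach (set (tags B0)) n TT (Or B0 Bc0) m \<and> erase B0 = B \<and> erase Bc0 = dualf B"
proof (induction B arbitrary: n)
  case FF
  have r0: "reach {} n TT TT n" by (rule start[OF ok_TT tlt_TT])
  have "reach {} n TT (Or TT FF) n" by (rule X_eq[OF r0, where C=Hole]) (auto intro: eq_base.intros)
  then have "reach {} n TT (Or FF TT) n" by (rule X_eq[where C=Hole]) (auto intro: eq_base.intros)
  then show ?case by (intro exI[of _ FF] exI[of _ TT] exI[of _ n]) (simp add: tags_def erase_def)
next
  case TT
  have r0: "reach {} n TT TT n" by (rule start[OF ok_TT tlt_TT])
  have "reach {} n TT (Or TT FF) n" by (rule X_eq[OF r0, where C=Hole]) (auto intro: eq_base.intros)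
  then show ?case by (intro exI[of _ TT] exI[of _ FF] exI[of _ n]) (simp add: tags_def erase_def)
next
  case (At a)
  have r0: "reach {ft n a} n TT (plug Hole TT) n" using start[OF ok_TT tlt_TT] by simp
  have "reach {ft n a} n TT (plug Hole (Or (At (a, ft n a)) (At (bar a, ft (Suc n) (bar a))))) (2*n+4)"
    by (rule ext_int[OF r0]) simp
  then show ?case by (intro exI[of _ "At (a, ft n a)"] exI[of _ "At (bar a, ft (Suc n) (bar a))"] exI[of _ "2*n+4"])
      (simp add: tags_def erase_def)
next
  case (Or B1 B2)
  obtain B1' Bc1 m1 where i1: "reach (set (tags B1')) n TT (Or B1' Bc1) m1" "erase B1' = B1" "erase Bc1 = dualf B1"
    using Or.IH(1) by blast
  obtain B2' Bc2 m2 where i2: "reach (set (tags B2')) m1 TT (Or B2' Bc2) m2" "erase B2' = B2" "erase Bc2 = dualf B2"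
    using Or.IH(2) by blast
  define S where "S = set (tags (Or B1' B2'))"
  have s1: "reach S n TT (Or B1' Bc1) m1" using reach_mono[OF i1(1)] by (auto simp: S_def tags_def)
  have s2: "reach S m1 TT (Or B2' Bc2) m2" using reach_mono[OF i2(1)] by (auto simp: S_def tags_def)
  have r0: "reach S n TT TT n" by (rule start[OF ok_TT tlt_TT])
  have "reach S n TT (And TT TT) n" by (rule X_eq[OF r0, where C=Hole]) (auto intro: eq_base.intros)
  then have "reach S n TT (And (Or B1' Bc1) TT) m1" by (rule X_sub[where C="CAndL Hole TT", OF _ _ s1]) auto
  then have "reach S n TT (And (Or B1' Bc1) (Or B2' Bc2)) m2" by (rule X_sub[where C="CAndR (Or B1' Bc1) Hole", OF _ _ s2]) auto
  then have "reach S n TT (And (Or B2' Bc2) (Or B1' Bc1)) m2" by (rule X_eq[where C=Hole]) (auto intro: eq_base.intros)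
  then have "reach S n TT (And (Or B2' Bc2) (Or Bc1 B1')) m2" by (rule X_eq[where C="CAndR (Or B2' Bc2) Hole"]) (auto intro: eq_base.intros)
  then have "reach S n TT (Or (And (Or B2' Bc2) Bc1) B1') m2" by (rule X_sw[where C=Hole]) auto
  then have "reach S n TT (Or (And Bc1 (Or B2' Bc2)) B1') m2" by (rule X_eq[where C="COrL Hole B1'"]) (auto intro: eq_base.intros)
  then have "reach S n TT (Or (And Bc1 (Or Bc2 B2')) B1') m2" by (rule X_eq[where C="COrL (CAndR Bc1 Hole) B1'"]) (auto intro: eq_base.intros)
  then have "reach S n TT (Or (Or (And Bc1 Bc2) B2') B1') m2" by (rule X_sw[where C="COrL Hole B1'"]) auto
  then have "reach S n TT (Or B1' (Or (And Bc1 Bc2) B2')) m2" by (rule X_eq[where C=Hole]) (auto intro: eq_base.intros)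
  then have "reach S n TT (Or B1' (Or B2' (And Bc1 Bc2))) m2" by (rule X_eq[where C="COrR B1' Hole"]) (auto intro: eq_base.intros)
  then have "reach S n TT (Or (Or B1' B2') (And Bc1 Bc2)) m2" by (rule X_eq[where C=Hole]) (auto intro: eq_base.intros)
  then show ?case using i1 i2 by (intro exI[of _ "Or B1' B2'"] exI[of _ "And Bc1 Bc2"] exI[of _ m2]) (simp add: S_def erase_def)
next
  case (And B1 B2)
  obtain B1' Bc1 m1 where i1: "reach (set (tags B1')) n TT (Or B1' Bc1) m1" "erase B1' = B1" "erase Bc1 = dualf B1"
    using And.IH(1) by blast
  obtain B2' Bc2 m2 where i2: "reach (set (tags B2')) m1 TT (Or B2' Bc2) m2" "erase B2' = B2" "erase Bc2 = dualf B2"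
    using And.IH(2) by blast
  define S where "S = set (tags (And B1' B2'))"
  have s1: "reach S n TT (Or B1' Bc1) m1" using reach_mono[OF i1(1)] by (auto simp: S_def tags_def)
  have s2: "reach S m1 TT (Or B2' Bc2) m2" using reach_mono[OF i2(1)] by (auto simp: S_def tags_def)
  have r0: "reach S n TT TT n" by (rule start[OF ok_TT tlt_TT])
  have "reach S n TT (And TT TT) n" by (rule X_eq[OF r0, where C=Hole]) (auto intro: eq_base.intros)
  then have "reach S n TT (And (Or B1' Bc1) TT) m1" by (rule X_sub[where C="CAndL Hole TT", OF _ _ s1]) auto
  then have "reach S n TT (And (Or B1' Bc1) (Or B2' Bc2)) m2" by (rule X_sub[where C="CAndR (Or B1' Bc1) Hole", OF _ _ s2]) auto
  then have "reach S n TT (Or (And (Or B1' Bc1) B2') Bc2) m2" by (rule X_sw[where C=Hole]) auto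
  then have "reach S n TT (Or (And B2' (Or B1' Bc1)) Bc2) m2" by (rule X_eq[where C="COrL Hole Bc2"]) (auto intro: eq_base.intros)
  then have "reach S n TT (Or (Or (And B2' B1') Bc1) Bc2) m2" by (rule X_sw[where C="COrL Hole Bc2"]) auto
  then have "reach S n TT (Or (And B2' B1') (Or Bc1 Bc2)) m2" by (rule X_eq[where C=Hole]) (auto intro: eq_base.intros)
  then have "reach S n TT (Or (And B1' B2') (Or Bc1 Bc2)) m2" by (rule X_eq[where C="COrL Hole (Or Bc1 Bc2)"]) (auto intro: eq_base.intros)
  then show ?case using i1 i2 by (intro exI[of _ "And B1' B2'"] exI[of _ "Or Bc1 Bc2"] exI[of _ m2]) (simp add: S_def erase_def)
qed

end


fun lit :: "'b fm \<Rightarrow> bool" where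
  "lit TT = True" | "lit (At p) = True" | "lit (And x y) = (lit x \<and> lit y)" | "lit FF = False" | "lit (Or x y) = False"

lemma erase_simps[simp]: "erase FF = FF" "erase TT = TT" "erase (At p) = At (fst p)"
  "erase (Or x y) = Or (erase x) (erase y)" "erase (And x y) = And (erase x) (erase y)"
  by (auto simp: erase_def)


context cons begin

lemma X_cow: "reach S n0 \<phi> \<psi> n \<Longrightarrow> \<psi> = plug C (At (a,i)) \<Longrightarrow> \<psi>' = plug C TT \<Longrightarrow> reach S n0 \<phi> \<psi>' n"
  using ext_cow by blast
lemma X_cut: "reach S n0 \<phi> \<psi> n \<Longrightarrow> \<psi> = plug C (And (At (a,i)) (At (bar a,j))) \<Longrightarrow> \<psi>' = plug C FF \<Longrightarrow> reach S n0 \<phi> \<psi>' n"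
  using ext_cut by blast

lemma okt_sub: "reach S n0 \<phi> \<psi> n \<Longrightarrow> \<psi> = plug C \<chi> \<Longrightarrow> ok \<chi> \<and> tlt \<chi> n"
  using reach_props ok_sub tlt_sub by blast

lemma CW: "ok X \<Longrightarrow> tlt X n \<Longrightarrow> \<exists>m. reach S n X TT m"
proof (induction X arbitrary: n)
  case FF
  define a0 :: 'a where "a0 = undefined"
  have r0: "reach S n FF (plug Hole FF) n" using start[OF FF.prems] by simp
  have "reach S n FF (plug Hole (At (a0, ft n a0))) (2*n+2)" by (rule ext_wk[OF r0])
  then have "reach S n FF TT (2*n+2)" by (rule X_cow[where C=Hole]) auto
  then show ?case by blast
next
  case TT then show ?case using start by blast
next
  case (At p)
  obtain a i where p: "p = (a,i)" by force
  have r0: "reach S n (At p) (At p) n" using start[OF At.prems] .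
  have "reach S n (At p) TT n" by (rule X_cow[OF r0, where C=Hole]) (auto simp: p)
  then show ?case by blast
next
  case (Or Y Z)
  have r0: "reach S n (Or Y Z) (Or Y Z) n" using start[OF Or.prems] .
  have "ok Y \<and> tlt Y n" using okt_sub[OF r0, where C="COrL Hole Z"] by simp
  then obtain m1 where s1: "reach S n Y TT m1" using Or.IH(1) by blast
  have r1: "reach S n (Or Y Z) (Or TT Z) m1" by (rule X_sub[OF r0 _ s1, where C="COrL Hole Z"]) auto
  have "ok Z \<and> tlt Z m1" using okt_sub[OF r1, where C="COrR TT Hole"] by simp
  then obtain m2 where s2: "reach S m1 Z TT m2" using Or.IH(2) by blast
  have "reach S n (Or Y Z) (Or TT TT) m2" by (rule X_sub[OF r1 _ s2, where C="COrR TT Hole"]) auto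
  then have "reach S n (Or Y Z) TT m2" by (rule X_eq[where C=Hole]) (auto intro: eq_base.intros)
  then show ?case by blast
next
  case (And Y Z)
  have r0: "reach S n (And Y Z) (And Y Z) n" using start[OF And.prems] .
  have "ok Y \<and> tlt Y n" using okt_sub[OF r0, where C="CAndL Hole Z"] by simp
  then obtain m1 where s1: "reach S n Y TT m1" using And.IH(1) by blast
  have r1: "reach S n (And Y Z) (And TT Z) m1" by (rule X_sub[OF r0 _ s1, where C="CAndL Hole Z"]) auto
  have "ok Z \<and> tlt Z m1" using okt_sub[OF r1, where C="CAndR TT Hole"] by simp
  then obtain m2 where s2: "reach S m1 Z TT m2" using And.IH(2) by blast
  have "reach S n (And Y Z) (And TT TT) m2" by (rule X_sub[OF r1 _ s2, where C="CAndR TT Hole"]) auto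
  then have "reach S n (And Y Z) TT m2" by (rule X_eq[where C=Hole]) (auto intro: eq_base.intros)
  then show ?case by blast
qed

lemma COC: "ok X \<Longrightarrow> tlt X n \<Longrightarrow> \<exists>X1 X2 m. reach S n X (And X1 X2) m \<and> erase X1 = erase X \<and> erase X2 = erase X"
proof (induction X arbitrary: n)
  case FF
  have r0: "reach S n FF FF n" using start[OF FF.prems] .
  have "reach S n FF (And FF FF) n" by (rule X_eq[OF r0, where C=Hole]) (auto intro: eq_base.intros)
  then show ?case by fastforce
next
  case TT
  have r0: "reach S n TT TT n" using start[OF TT.prems] .
  have "reach S n TT (And TT TT) n" by (rule X_eq[OF r0, where C=Hole]) (auto intro: eq_base.intros)
  then show ?case by fastforce
next
  case (At p)
  obtain a i where p: "p = (a,i)" by force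
  have r0: "reach S n (At p) (plug Hole (At (a,i))) n" using start[OF At.prems] p by simp
  have "reach S n (At p) (plug Hole (And (At (a, ft n a)) (At (a, ft (Suc n) a)))) (2*n+4)" by (rule ext_coc[OF r0])
  then show ?case using p by fastforce
next
  case (Or Y Z)
  have r0: "reach S n (Or Y Z) (Or Y Z) n" using start[OF Or.prems] .
  have "ok Y \<and> tlt Y n" using okt_sub[OF r0, where C="COrL Hole Z"] by simp
  then obtain Y1 Y2 m1 where s1: "reach S n Y (And Y1 Y2) m1" "erase Y1 = erase Y" "erase Y2 = erase Y" using Or.IH(1) by blast
  have r1: "reach S n (Or Y Z) (Or (And Y1 Y2) Z) m1" by (rule X_sub[OF r0 _ s1(1), where C="COrL Hole Z"]) auto
  have "ok Z \<and> tlt Z m1" using okt_sub[OF r1, where C="COrR (And Y1 Y2) Hole"] by simp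
  then obtain Z1 Z2 m2 where s2: "reach S m1 Z (And Z1 Z2) m2" "erase Z1 = erase Z" "erase Z2 = erase Z" using Or.IH(2) by blast
  have "reach S n (Or Y Z) (Or (And Y1 Y2) (And Z1 Z2)) m2" by (rule X_sub[OF r1 _ s2(1), where C="COrR (And Y1 Y2) Hole"]) auto
  then have "reach S n (Or Y Z) (And (Or Y1 Z1) (Or Y2 Z2)) m2" by (rule X_med[where C=Hole]) auto
  then show ?case using s1 s2 by fastforce
next
  case (And Y Z)
  have r0: "reach S n (And Y Z) (And Y Z) n" using start[OF And.prems] .
  have "ok Y \<and> tlt Y n" using okt_sub[OF r0, where C="CAndL Hole Z"] by simp
  then obtain Y1 Y2 m1 where s1: "reach S n Y (And Y1 Y2) m1" "erase Y1 = erase Y" "erase Y2 = erase Y" using And.IH(1) by blast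
  have r1: "reach S n (And Y Z) (And (And Y1 Y2) Z) m1" by (rule X_sub[OF r0 _ s1(1), where C="CAndL Hole Z"]) auto
  have "ok Z \<and> tlt Z m1" using okt_sub[OF r1, where C="CAndR (And Y1 Y2) Hole"] by simp
  then obtain Z1 Z2 m2 where s2: "reach S m1 Z (And Z1 Z2) m2" "erase Z1 = erase Z" "erase Z2 = erase Z" using And.IH(2) by blast
  have "reach S n (And Y Z) (And (And Y1 Y2) (And Z1 Z2)) m2" by (rule X_sub[OF r1 _ s2(1), where C="CAndR (And Y1 Y2) Hole"]) auto
  then have "reach S n (And Y Z) (And Y1 (And Y2 (And Z1 Z2))) m2" by (rule X_eq[where C=Hole]) (auto intro: eq_base.intros)
  then have "reach S n (And Y Z) (And Y1 (And (And Y2 Z1) Z2)) m2" by (rule X_eq[where C="CAndR Y1 Hole"]) (auto intro: eq_base.intros)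
  then have "reach S n (And Y Z) (And Y1 (And (And Z1 Y2) Z2)) m2" by (rule X_eq[where C="CAndR Y1 (CAndL Hole Z2)"]) (auto intro: eq_base.intros)
  then have "reach S n (And Y Z) (And Y1 (And Z1 (And Y2 Z2))) m2" by (rule X_eq[where C="CAndR Y1 Hole"]) (auto intro: eq_base.intros)
  then have "reach S n (And Y Z) (And (And Y1 Z1) (And Y2 Z2)) m2" by (rule X_eq[where C=Hole]) (auto intro: eq_base.intros)
  then show ?case using s1 s2 by fastforce
qed


lemma EX1: "lit L \<Longrightarrow> ok L \<Longrightarrow> tlt L n \<Longrightarrow> p \<in> set (occs L) \<Longrightarrow> \<exists>m. reach S n L (At p) m"
proof (induction L arbitrary: n)
  case (At q) then show ?case using start by fastforce
next
  case (And L1 L2)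
  have r0: "reach S n (And L1 L2) (And L1 L2) n" using start[OF And.prems(2,3)] .
  show ?case
  proof (cases "p \<in> set (occs L1)")
    case True
    have "ok L1 \<and> tlt L1 n" using okt_sub[OF r0, where C="CAndL Hole L2"] by simp
    then obtain m1 where s1: "reach S n L1 (At p) m1" using And.IH(1) True And.prems(1) by auto
    have r1: "reach S n (And L1 L2) (And (At p) L2) m1" by (rule X_sub[OF r0 _ s1, where C="CAndL Hole L2"]) auto
    have "ok L2 \<and> tlt L2 m1" using okt_sub[OF r1, where C="CAndR (At p) Hole"] by simp
    then obtain m2 where s2: "reach S m1 L2 TT m2" using CW by blast
    have "reach S n (And L1 L2) (And (At p) TT) m2" by (rule X_sub[OF r1 _ s2, where C="CAndR (At p) Hole"]) auto
    then have "reach S n (And L1 L2) (At p) m2" by (rule X_eq[where C=Hole]) (auto intro: eq_base.intros)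
    then show ?thesis by blast
  next
    case False
    then have p2: "p \<in> set (occs L2)" using And.prems(4) by simp
    have "ok L1 \<and> tlt L1 n" using okt_sub[OF r0, where C="CAndL Hole L2"] by simp
    then obtain m1 where s1: "reach S n L1 TT m1" using CW by blast
    have r1: "reach S n (And L1 L2) (And TT L2) m1" by (rule X_sub[OF r0 _ s1, where C="CAndL Hole L2"]) auto
    have "ok L2 \<and> tlt L2 m1" using okt_sub[OF r1, where C="CAndR TT Hole"] by simp
    then obtain m2 where s2: "reach S m1 L2 (At p) m2" using And.IH(2) p2 And.prems(1) by auto
    have "reach S n (And L1 L2) (And TT (At p)) m2" by (rule X_sub[OF r1 _ s2, where C="CAndR TT Hole"]) auto
    then have "reach S n (And L1 L2) (And (At p) TT) m2" by (rule X_eq[where C=Hole]) (auto intro: eq_base.intros)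
    then have "reach S n (And L1 L2) (At p) m2" by (rule X_eq[where C=Hole]) (auto intro: eq_base.intros)
    then show ?thesis by blast
  qed
qed auto

lemma EX2: "lit L \<Longrightarrow> ok L \<Longrightarrow> tlt L n \<Longrightarrow> p \<in> set (occs L) \<Longrightarrow> q \<in> set (occs L) \<Longrightarrow> p \<noteq> q
   \<Longrightarrow> \<exists>m. reach S n L (And (At p) (At q)) m"
proof (induction L arbitrary: n)
  case (And L1 L2)
  have r0: "reach S n (And L1 L2) (And L1 L2) n" using start[OF And.prems(2,3)] .
  have l: "lit L1" "lit L2" using And.prems(1) by auto
  have o1: "ok L1 \<and> tlt L1 n" using okt_sub[OF r0, where C="CAndL Hole L2"] by simp
  show ?case
  proof (cases "p \<in> set (occs L1)"; cases "q \<in> set (occs L1)")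
    assume p1: "p \<in> set (occs L1)" and q1: "q \<in> set (occs L1)"
    obtain m1 where s1: "reach S n L1 (And (At p) (At q)) m1" using And.IH(1) p1 q1 l o1 And.prems(6) by blast
    have r1: "reach S n (And L1 L2) (And (And (At p) (At q)) L2) m1" by (rule X_sub[OF r0 _ s1, where C="CAndL Hole L2"]) auto
    have "ok L2 \<and> tlt L2 m1" using okt_sub[OF r1, where C="CAndR (And (At p) (At q)) Hole"] by simp
    then obtain m2 where s2: "reach S m1 L2 TT m2" using CW by blast
    have "reach S n (And L1 L2) (And (And (At p) (At q)) TT) m2" by (rule X_sub[OF r1 _ s2, where C="CAndR (And (At p) (At q)) Hole"]) auto
    then have "reach S n (And L1 L2) (And (At p) (At q)) m2" by (rule X_eq[where C=Hole]) (auto intro: eq_base.intros)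
    then show ?thesis by blast
  next
    assume p1: "p \<in> set (occs L1)" and q1: "q \<notin> set (occs L1)"
    then have q2: "q \<in> set (occs L2)" using And.prems(5) by simp
    obtain m1 where s1: "reach S n L1 (At p) m1" using EX1 p1 l o1 by blast
    have r1: "reach S n (And L1 L2) (And (At p) L2) m1" by (rule X_sub[OF r0 _ s1, where C="CAndL Hole L2"]) auto
    have "ok L2 \<and> tlt L2 m1" using okt_sub[OF r1, where C="CAndR (At p) Hole"] by simp
    then obtain m2 where s2: "reach S m1 L2 (At q) m2" using EX1 q2 l by blast
    have "reach S n (And L1 L2) (And (At p) (At q)) m2" by (rule X_sub[OF r1 _ s2, where C="CAndR (At p) Hole"]) auto
    then show ?thesis by blast
  next
    assume p1: "p \<notin> set (occs L1)" and q1: "q \<in> set (occs L1)"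
    then have p2: "p \<in> set (occs L2)" using And.prems(4) by simp
    obtain m1 where s1: "reach S n L1 (At q) m1" using EX1 q1 l o1 by blast
    have r1: "reach S n (And L1 L2) (And (At q) L2) m1" by (rule X_sub[OF r0 _ s1, where C="CAndL Hole L2"]) auto
    have "ok L2 \<and> tlt L2 m1" using okt_sub[OF r1, where C="CAndR (At q) Hole"] by simp
    then obtain m2 where s2: "reach S m1 L2 (At p) m2" using EX1 p2 l by blast
    have "reach S n (And L1 L2) (And (At q) (At p)) m2" by (rule X_sub[OF r1 _ s2, where C="CAndR (At q) Hole"]) auto
    then have "reach S n (And L1 L2) (And (At p) (At q)) m2" by (rule X_eq[where C=Hole]) (auto intro: eq_base.intros)
    then show ?thesis by blast
  next
    assume p1: "p \<notin> set (occs L1)" and q1: "q \<notin> set (occs L1)"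
    then have p2: "p \<in> set (occs L2)" "q \<in> set (occs L2)" using And.prems(4,5) by auto
    obtain m1 where s1: "reach S n L1 TT m1" using CW o1 by blast
    have r1: "reach S n (And L1 L2) (And TT L2) m1" by (rule X_sub[OF r0 _ s1, where C="CAndL Hole L2"]) auto
    have "ok L2 \<and> tlt L2 m1" using okt_sub[OF r1, where C="CAndR TT Hole"] by simp
    then obtain m2 where s2: "reach S m1 L2 (And (At p) (At q)) m2" using And.IH(2) p2 l And.prems(6) by blast
    have "reach S n (And L1 L2) (And TT (And (At p) (At q))) m2" by (rule X_sub[OF r1 _ s2, where C="CAndR TT Hole"]) auto
    then have "reach S n (And L1 L2) (And (And (At p) (At q)) TT) m2" by (rule X_eq[where C=Hole]) (auto intro: eq_base.intros)
    then have "reach S n (And L1 L2) (And (At p) (At q)) m2" by (rule X_eq[where C=Hole]) (auto intro: eq_base.intros)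
    then show ?thesis by blast
  qed
qed auto

end


fun eval :: "('b \<Rightarrow> bool) \<Rightarrow> 'b fm \<Rightarrow> bool" where
  "eval v FF = False" | "eval v TT = True" | "eval v (At a) = v a"
| "eval v (Or x y) = (eval v x \<or> eval v y)" | "eval v (And x y) = (eval v x \<and> eval v y)"

fun conj :: "'b fm list \<Rightarrow> 'b fm" where
  "conj [] = TT" | "conj (g#G) = And g (conj G)"

fun fsz :: "'b fm \<Rightarrow> nat" where
  "fsz FF = 1" | "fsz TT = 1" | "fsz (At a) = 1" | "fsz (Or x y) = fsz x + fsz y + 1" | "fsz (And x y) = fsz x + fsz y + 1"

definition msr :: "'b fm list \<Rightarrow> nat" where "msr G = sum_list (map fsz G)"

lemma fsz_pos[simp]: "0 < fsz g" by (cases g) auto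

lemma fsz_erase: "fsz (erase x) = fsz x" by (induction x) auto
lemma lit_erase: "lit (erase x) = lit x" by (induction x) auto

lemma msr_erase: "map erase G1 = map erase G \<Longrightarrow> msr G1 = msr G"
proof -
  assume a: "map erase G1 = map erase G"
  have "msr G1 = sum_list (map fsz (map erase G1))" by (simp add: msr_def o_def fsz_erase)
  also have "\<dots> = sum_list (map fsz (map erase G))" using a by simp
  also have "\<dots> = msr G" by (simp add: msr_def o_def fsz_erase)
  finally show ?thesis .
qed

lemma erase_And: "erase X = And a b \<Longrightarrow> \<exists>x y. X = And x y \<and> erase x = a \<and> erase y = b"
  by (cases X) auto

lemma erase_conj: "erase X = erase (conj G) \<Longrightarrow> \<exists>G1. X = conj G1 \<and> map erase G1 = map erase G"
proof (induction G arbitrary: X)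
  case Nil then show ?case by (cases X) (auto intro: exI[of _ "[]"])
next
  case (Cons g G)
  obtain x y where "X = And x y" "erase x = erase g" "erase y = erase (conj G)"
    using erase_And Cons.prems by fastforce
  then show ?case using Cons.IH[of y] by (metis conj.simps(2) list.simps(9))
qed

context cons begin

definition resp :: "('a \<Rightarrow> bool) \<Rightarrow> bool" where "resp v \<longleftrightarrow> (\<forall>a. v (bar a) = (\<not> v a))"

definition sat :: "'a tfm \<Rightarrow> 'a tfm list \<Rightarrow> bool" where
  "sat L G \<longleftrightarrow> (\<exists>v. resp v \<and> eval v (erase L) \<and> (\<forall>g\<in>set G. eval v (erase g)))"

lemma sat_tr: "erase L1 = erase L \<Longrightarrow> map erase G1 = map erase G \<Longrightarrow> sat L1 G1 = sat L G"
proof -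
  assume a: "erase L1 = erase L" "map erase G1 = map erase G"
  have "\<And>v. (\<forall>g\<in>set G1. eval v (erase g)) = (\<forall>g\<in>set G. eval v (erase g))"
  proof -
    fix v
    have "(\<forall>g\<in>set G1. eval v (erase g)) = (\<forall>h\<in>set (map erase G1). eval v h)" by simp
    also have "\<dots> = (\<forall>h\<in>set (map erase G). eval v h)" using a(2) by simp
    finally show "(\<forall>g\<in>set G1. eval v (erase g)) = (\<forall>g\<in>set G. eval v (erase g))" by simp
  qed
  then show ?thesis using a(1) by (simp add: sat_def)
qed

lemma lit_eval: "lit L \<Longrightarrow> (\<forall>p\<in>set (occs L). v (fst p)) \<Longrightarrow> eval v (erase L)"
  by (induction L) auto

lemma litsat:
  assumes "lit L" "\<not> (\<exists>x i j. (x,i) \<in> set (occs L) \<and> (bar x,j) \<in> set (occs L))"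
  shows "sat L []"
proof -
  define As where "As = fst ` set (occs L)"
  define v where "v y = (y \<in> As \<or> (bar y \<notin> As \<and> sgn y))" for y
  have nb: "\<And>a. \<not> (a \<in> As \<and> bar a \<in> As)" using assms(2) by (force simp: As_def)
  have "resp v" unfolding resp_def v_def
  proof
    fix a show "(bar a \<in> As \<or> bar (bar a) \<notin> As \<and> sgn (bar a)) = (\<not> (a \<in> As \<or> bar a \<notin> As \<and> sgn a))"
      using nb[of a] by (auto simp: bb sg)
  qed
  moreover have "eval v (erase L)" using assms(1) by (rule lit_eval) (auto simp: v_def As_def)
  ultimately show ?thesis by (auto simp: sat_def)
qed

lemma TAB: "lit L \<Longrightarrow> ok (And L (conj G)) \<Longrightarrow> tlt (And L (conj G)) n \<Longrightarrow> \<not> sat L G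
   \<Longrightarrow> \<exists>m. reach S n (And L (conj G)) FF m"
proof (induction "msr G" arbitrary: G L n rule: less_induct)
  case less
  have r0: "reach S n (And L (conj G)) (And L (conj G)) n" using start[OF less.prems(2,3)] .
  show ?case
  proof (cases G)
    case Nil
    have r1: "reach S n (And L (conj G)) L n" by (rule X_eq[OF r0, where C=Hole]) (auto simp: Nil intro: eq_base.intros)
    obtain x i j where c: "(x,i) \<in> set (occs L)" "(bar x,j) \<in> set (occs L)"
      using litsat less.prems(1,4) Nil by blast
    have "(x,i) \<noteq> (bar x,j)" using bn[of x] by auto
    moreover have "ok L \<and> tlt L n" using okt_sub[OF r1, where C=Hole] by simp
    ultimately obtain m where s: "reach S n L (And (At (x,i)) (At (bar x,j))) m"
      using EX2 less.prems(1) c by blast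
    have "reach S n (And L (conj G)) (And (At (x,i)) (At (bar x,j))) m" using reach_trans[OF r1 s] .
    then have "reach S n (And L (conj G)) FF m" by (rule X_cut[where C=Hole]) auto
    then show ?thesis by blast
  next
    case (Cons g G')
    note r0 = r0[unfolded Cons conj.simps]
    show ?thesis
    proof (cases g)
      case TT
      have "reach S n (And L (And g (conj G'))) (And L (And (conj G') TT)) n"
        by (rule X_eq[OF r0, where C="CAndR L Hole"]) (auto simp: TT intro: eq_base.intros)
      then have r1: "reach S n (And L (And g (conj G'))) (And L (conj G')) n"
        by (rule X_eq[where C="CAndR L Hole"]) (auto intro: eq_base.intros)
      have "ok (And L (conj G')) \<and> tlt (And L (conj G')) n" using okt_sub[OF r1, where C=Hole] by simp
      moreover have "\<not> sat L G'" using less.prems(4) by (auto simp: sat_def Cons TT)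
      moreover have "msr G' < msr G" by (simp add: msr_def Cons)
      ultimately obtain m where "reach S n (And L (conj G')) FF m" using less.hyps less.prems(1) by blast
      then show ?thesis using reach_trans[OF r1] Cons by auto
    next
      case FF
      have "ok L \<and> tlt L n" using okt_sub[OF r0, where C="CAndL Hole (And g (conj G'))"] by simp
      then obtain m1 where s1: "reach S n L TT m1" using CW by blast
      have r1: "reach S n (And L (And g (conj G'))) (And TT (And FF (conj G'))) m1"
        by (rule X_sub[OF r0 _ s1, where C="CAndL Hole (And g (conj G'))"]) (auto simp: FF)
      have "ok (conj G') \<and> tlt (conj G') m1" using okt_sub[OF r1, where C="CAndR TT (CAndR FF Hole)"] by simp
      then obtain m2 where s2: "reach S m1 (conj G') TT m2" using CW by blast
      have "reach S n (And L (And g (conj G'))) (And TT (And FF TT)) m2"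
        by (rule X_sub[OF r1 _ s2, where C="CAndR TT (CAndR FF Hole)"]) auto
      then have "reach S n (And L (And g (conj G'))) (And TT FF) m2"
        by (rule X_eq[where C="CAndR TT Hole"]) (auto intro: eq_base.intros)
      then have "reach S n (And L (And g (conj G'))) (And FF TT) m2"
        by (rule X_eq[where C=Hole]) (auto intro: eq_base.intros)
      then have "reach S n (And L (And g (conj G'))) FF m2"
        by (rule X_eq[where C=Hole]) (auto intro: eq_base.intros)
      then show ?thesis using Cons by auto
    next
      case (At p)
      have r1: "reach S n (And L (And g (conj G'))) (And (And L (At p)) (conj G')) n"
        by (rule X_eq[OF r0, where C=Hole]) (auto simp: At intro: eq_base.intros)
      have "ok (And (And L (At p)) (conj G')) \<and> tlt (And (And L (At p)) (conj G')) n" using okt_sub[OF r1, where C=Hole] by simp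
      moreover have "\<not> sat (And L (At p)) G'" using less.prems(4) by (auto simp: sat_def Cons At)
      moreover have "msr G' < msr G" by (simp add: msr_def Cons)
      moreover have "lit (And L (At p))" using less.prems(1) by simp
      ultimately obtain m where "reach S n (And (And L (At p)) (conj G')) FF m" using less.hyps by blast
      then show ?thesis using reach_trans[OF r1] Cons by auto
    next
      case (And g1 g2)
      have r1: "reach S n (And L (And g (conj G'))) (And L (conj (g1#g2#G'))) n"
        by (rule X_eq[OF r0, where C="CAndR L Hole"]) (auto simp: And intro: eq_base.intros)
      have "ok (And L (conj (g1#g2#G'))) \<and> tlt (And L (conj (g1#g2#G'))) n" using okt_sub[OF r1, where C=Hole] by simp
      moreover have "\<not> sat L (g1#g2#G')" using less.prems(4) by (auto simp: sat_def Cons And)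
      moreover have "msr (g1#g2#G') < msr G" by (simp add: msr_def Cons And)
      ultimately obtain m where "reach S n (And L (conj (g1#g2#G'))) FF m" using less.hyps less.prems(1) by blast
      then show ?thesis using reach_trans[OF r1] Cons by auto
    next
      case (Or g1 g2)
      define R where "R = conj G'"
      have r1: "reach S n (And L (And g (conj G'))) (And (And L R) (Or g1 g2)) n"
      proof -
        have "reach S n (And L (And g (conj G'))) (And L (And R (Or g1 g2))) n"
          by (rule X_eq[OF r0, where C="CAndR L Hole"]) (auto simp: Or R_def intro: eq_base.intros)
        then show ?thesis by (rule X_eq[where C=Hole]) (auto intro: eq_base.intros)
      qed
      have "ok (And L R) \<and> tlt (And L R) n" using okt_sub[OF r1, where C="CAndL Hole (Or g1 g2)"] by simp
      then obtain X1 X2 m1 where co: "reach S n (And L R) (And X1 X2) m1" "erase X1 = erase (And L R)" "erase X2 = erase (And L R)"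
        using COC by blast
      obtain L1 R1 where x1: "X1 = And L1 R1" "erase L1 = erase L" "erase R1 = erase R" using erase_And co(2) by fastforce
      obtain L2 R2 where x2: "X2 = And L2 R2" "erase L2 = erase L" "erase R2 = erase R" using erase_And co(3) by fastforce
      obtain G1 where g1: "R1 = conj G1" "map erase G1 = map erase G'" using erase_conj x1(3) R_def by blast
      obtain G2 where g2: "R2 = conj G2" "map erase G2 = map erase G'" using erase_conj x2(3) R_def by blast
      have "reach S n (And L (And g (conj G'))) (And (And X1 X2) (Or g1 g2)) m1"
        by (rule X_sub[OF r1 _ co(1), where C="CAndL Hole (Or g1 g2)"]) auto
      then have "reach S n (And L (And g (conj G'))) (And X1 (And X2 (Or g1 g2))) m1"
        by (rule X_eq[where C=Hole]) (auto intro: eq_base.intros)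
      then have "reach S n (And L (And g (conj G'))) (And X1 (Or (And X2 g1) g2)) m1"
        by (rule X_sw[where C="CAndR X1 Hole"]) auto
      then have "reach S n (And L (And g (conj G'))) (And X1 (Or g2 (And X2 g1))) m1"
        by (rule X_eq[where C="CAndR X1 Hole"]) (auto intro: eq_base.intros)
      then have "reach S n (And L (And g (conj G'))) (Or (And X1 g2) (And X2 g1)) m1"
        by (rule X_sw[where C=Hole]) auto
      then have "reach S n (And L (And g (conj G'))) (Or (And L1 (And R1 g2)) (And X2 g1)) m1"
        by (rule X_eq[where C="COrL Hole (And X2 g1)"]) (auto simp: x1 intro: eq_base.intros)
      then have r2: "reach S n (And L (And g (conj G'))) (Or (And L1 (conj (g2#G1))) (And X2 g1)) m1"
        by (rule X_eq[where C="COrL (CAndR L1 Hole) (And X2 g1)"]) (auto simp: g1 intro: eq_base.intros)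
      have "ok (And L1 (conj (g2#G1))) \<and> tlt (And L1 (conj (g2#G1))) m1" using okt_sub[OF r2, where C="COrL Hole (And X2 g1)"] by simp
      moreover have "\<not> sat L1 (g2#G1)"
      proof
        assume "sat L1 (g2#G1)"
        then have "sat L (g2#G')" using sat_tr[of L1 L "g2#G1" "g2#G'"] x1 g1 by simp
        then show False using less.prems(4) by (auto simp: sat_def Cons Or)
      qed
      moreover have "msr (g2#G1) < msr G" using msr_erase[OF g1(2)] by (simp add: msr_def Cons Or)
      moreover have "lit L1" using less.prems(1) x1(2) lit_erase by metis
      ultimately obtain m2 where s2: "reach S m1 (And L1 (conj (g2#G1))) FF m2" using less.hyps by blast
      have "reach S n (And L (And g (conj G'))) (Or FF (And X2 g1)) m2"
        by (rule X_sub[OF r2 _ s2, where C="COrL Hole (And X2 g1)"]) auto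
      then have "reach S n (And L (And g (conj G'))) (Or FF (And L2 (And R2 g1))) m2"
        by (rule X_eq[where C="COrR FF Hole"]) (auto simp: x2 intro: eq_base.intros)
      then have r3: "reach S n (And L (And g (conj G'))) (Or FF (And L2 (conj (g1#G2)))) m2"
        by (rule X_eq[where C="COrR FF (CAndR L2 Hole)"]) (auto simp: g2 intro: eq_base.intros)
      have "ok (And L2 (conj (g1#G2))) \<and> tlt (And L2 (conj (g1#G2))) m2" using okt_sub[OF r3, where C="COrR FF Hole"] by simp
      moreover have "\<not> sat L2 (g1#G2)"
      proof
        assume "sat L2 (g1#G2)"
        then have "sat L (g1#G')" using sat_tr[of L2 L "g1#G2" "g1#G'"] x2 g2 by simp
        then show False using less.prems(4) by (auto simp: sat_def Cons Or)
      qed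
      moreover have "msr (g1#G2) < msr G" using msr_erase[OF g2(2)] by (simp add: msr_def Cons Or)
      moreover have "lit L2" using less.prems(1) x2(2) lit_erase by metis
      ultimately obtain m3 where s3: "reach S m2 (And L2 (conj (g1#G2))) FF m3" using less.hyps by blast
      have "reach S n (And L (And g (conj G'))) (Or FF FF) m3"
        by (rule X_sub[OF r3 _ s3, where C="COrR FF Hole"]) auto
      then have "reach S n (And L (And g (conj G'))) FF m3"
        by (rule X_eq[where C=Hole]) (auto intro: eq_base.intros)
      then show ?thesis using Cons by auto
    qed
  qed
qed

end


lemma eval_erase: "eval v (erase x) = eval (v \<circ> fst) x"
  by (induction x) auto

lemma eq_eval: "eq_base x y \<Longrightarrow> eval w x = eval w y"
  by (induction rule: eq_base.induct) auto

lemma plug_mono: "(eval w r \<Longrightarrow> eval w r') \<Longrightarrow> eval w (plug C r) \<Longrightarrow> eval w (plug C r')"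
  by (induction C) auto

lemma rule_sound: "rule_inst bar r r' v \<Longrightarrow> (\<forall>a. w (bar a) = (\<not> w a)) \<Longrightarrow> eval (w \<circ> fst) r \<Longrightarrow> eval (w \<circ> fst) r'"
  by (erule rule_inst.cases) (auto dest: eq_eval)

lemma deriv_sound:
  assumes sd: "sks_deriv bar (fs,st)" and w: "\<forall>a. w (bar a) = (\<not> w a)" and h: "eval w (erase (hd fs))"
  shows "eval w (erase (last fs))"
proof -
  have L: "length fs = Suc (length st)" using sd by (simp add: sks_deriv_def Let_def)
  have ST: "\<And>k. k < length st \<Longrightarrow> \<exists>C r r' v. fs!k = plug C r \<and> fs!Suc k = plug C r' \<and> rule_inst bar r r' v"
    using sd unfolding sks_deriv_def Let_def by (cases "st!k") force
  have "\<forall>k. k < length fs \<longrightarrow> eval (w \<circ> fst) (fs!k)"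
  proof (intro allI impI)
    fix k assume "k < length fs"
    then show "eval (w \<circ> fst) (fs!k)"
    proof (induction k)
      case 0 then show ?case using h L by (cases fs) (simp_all add: eval_erase o_def)
    next
      case (Suc k)
      have k: "k < length st" using Suc.prems L by simp
      obtain C r r' v where c: "fs!k = plug C r" "fs!Suc k = plug C r'" "rule_inst bar r r' v"
        using ST[OF k] by blast
      have "eval (w \<circ> fst) (fs!k)" using Suc.IH Suc.prems by (simp add: o_def)
      then show ?case using plug_mono[of "w \<circ> fst" r r' C] rule_sound[OF c(3) w] c(1,2) by (simp add: o_def)
    qed
  qed
  then have "eval (w \<circ> fst) (fs!(length st))" using L by simp
  moreover have "last fs = fs!(length st)" using L by (metis diff_Suc_1 last_conv_nth length_0_conv nat.distinct(1))
  ultimately show ?thesis by (simp add: eval_erase)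
qed

context cons begin

lemma dual_eval: "resp v \<Longrightarrow> eval v (dualf B) = (\<not> eval v B)"
  by (induction B) (auto simp: resp_def)

lemma TAG: "\<exists>A0 m. erase A0 = A \<and> ok A0 \<and> set (tags A0) \<subseteq> {n..<m} \<and> n \<le> m"
proof (induction A arbitrary: n)
  case FF then show ?case by (intro exI[of _ FF] exI[of _ n]) (auto simp: ok_def tags_def)
next
  case TT then show ?case by (intro exI[of _ TT] exI[of _ n]) (auto simp: ok_def tags_def)
next
  case (At a) then show ?case using ft_ge[of n a]
    by (intro exI[of _ "At (a, ft n a)"] exI[of _ "2*n+2"]) (auto simp: ok_def tags_def ft_par)
next
  case (Or A1 A2)
  obtain X1 m1 where 1: "erase X1 = A1" "ok X1" "set (tags X1) \<subseteq> {n..<m1}" "n \<le> m1" using Or.IH(1) by blast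
  obtain X2 m2 where 2: "erase X2 = A2" "ok X2" "set (tags X2) \<subseteq> {m1..<m2}" "m1 \<le> m2" using Or.IH(2) by blast
  have t: "tags (Or X1 X2) = tags X1 @ tags X2" "occs (Or X1 X2) = occs X1 @ occs X2" by (simp_all add: tags_def)
  have dj: "set (tags X1) \<inter> set (tags X2) = {}" using 1(3) 2(3) by fastforce
  have "ok (Or X1 X2)" using 1(2) 2(2) dj unfolding ok_def t by auto
  moreover have "set (tags (Or X1 X2)) \<subseteq> {n..<m2}" using 1(3,4) 2(3,4) unfolding t by auto
  ultimately show ?case using 1 2 by (intro exI[of _ "Or X1 X2"] exI[of _ m2]) auto
next
  case (And A1 A2)
  obtain X1 m1 where 1: "erase X1 = A1" "ok X1" "set (tags X1) \<subseteq> {n..<m1}" "n \<le> m1" using And.IH(1) by blast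
  obtain X2 m2 where 2: "erase X2 = A2" "ok X2" "set (tags X2) \<subseteq> {m1..<m2}" "m1 \<le> m2" using And.IH(2) by blast
  have t: "tags (And X1 X2) = tags X1 @ tags X2" "occs (And X1 X2) = occs X1 @ occs X2" by (simp_all add: tags_def)
  have dj: "set (tags X1) \<inter> set (tags X2) = {}" using 1(3) 2(3) by fastforce
  have "ok (And X1 X2)" using 1(2) 2(2) dj unfolding ok_def t by auto
  moreover have "set (tags (And X1 X2)) \<subseteq> {n..<m2}" using 1(3,4) 2(3,4) unfolding t by auto
  ultimately show ?case using 1 2 by (intro exI[of _ "And X1 X2"] exI[of _ m2]) auto
qed

lemma to_list: "reach S n \<phi> \<psi> m \<Longrightarrow> \<exists>fs st. length fs = Suc (length st) \<and> hd fs = \<phi> \<and> last fs = \<psi>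
   \<and> (\<forall>k<length st. case st!k of (C,r,r',v) \<Rightarrow> fs!k = plug C r \<and> fs!Suc k = plug C r' \<and> rule_inst bar r r' v)
   \<and> (\<forall>k<length fs. ok (fs!k))
   \<and> (\<forall>k<length st. intok S (step_info (st!k)) \<and> created (step_info (st!k)) \<subseteq> {n..})
   \<and> (\<forall>k<length st. \<forall>e\<in>created (step_info (st!k)). \<forall>j\<le>k. e \<notin> set (tags (fs!j)))"
proof (induction rule: reach.induct)
  case (refl \<phi> n m)
  then show ?case by (intro exI[of _ "[\<phi>]"] exI[of _ "[]"]) auto
next
  case (step \<phi> n \<phi>' v n' \<psi> m)
  obtain fs st where IH: "length fs = Suc (length st)" "hd fs = \<phi>'" "last fs = \<psi>"
    "\<forall>k<length st. case st!k of (C,r,r',v) \<Rightarrow> fs!k = plug C r \<and> fs!Suc k = plug C r' \<and> rule_inst bar r r' v"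
    "\<forall>k<length fs. ok (fs!k)"
    "\<forall>k<length st. intok S (step_info (st!k)) \<and> created (step_info (st!k)) \<subseteq> {n'..}"
    "\<forall>k<length st. \<forall>e\<in>created (step_info (st!k)). \<forall>j\<le>k. e \<notin> set (tags (fs!j))"
    using step.IH by blast
  obtain C r r' where o: "\<phi> = plug C r" "\<phi>' = plug C r'" "rule_inst bar r r' v" using step.hyps(3) by (auto simp: onestep_def)
  have ne: "fs \<noteq> []" using IH(1) by auto
  have f0: "fs!0 = \<phi>'" using IH(2) ne by (simp add: hd_conv_nth)
  let ?fs = "\<phi> # fs" and ?st = "(C,r,r',v) # st"
  have A: "\<forall>k<length ?st. case ?st!k of (C,r,r',v) \<Rightarrow> ?fs!k = plug C r \<and> ?fs!Suc k = plug C r' \<and> rule_inst bar r r' v"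
  proof (intro allI impI)
    fix k assume "k < length ?st"
    then show "case ?st!k of (C,r,r',v) \<Rightarrow> ?fs!k = plug C r \<and> ?fs!Suc k = plug C r' \<and> rule_inst bar r r' v"
      using o f0 IH(4) by (cases k) auto
  qed
  have B: "\<forall>k<length ?fs. ok (?fs!k)"
  proof (intro allI impI)
    fix k assume "k < length ?fs" then show "ok (?fs!k)" using step.hyps(1) IH(5) by (cases k) auto
  qed
  have tl: "\<forall>e\<in>set (tags \<phi>). e < n" using step.hyps(2) by (simp add: tlt_def)
  have C: "\<forall>k<length ?st. intok S (step_info (?st!k)) \<and> created (step_info (?st!k)) \<subseteq> {n..}"
  proof (intro allI impI)
    fix k assume "k < length ?st"
    then show "intok S (step_info (?st!k)) \<and> created (step_info (?st!k)) \<subseteq> {n..}"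
    proof (cases k)
      case 0 then show ?thesis using step.hyps(4,5) by (simp add: step_info_def)
    next
      case (Suc k')
      then have "k' < length st" using \<open>k < length ?st\<close> by simp
      then have "intok S (step_info (st!k')) \<and> created (step_info (st!k')) \<subseteq> {n'..}" using IH(6) by blast
      then show ?thesis using Suc step.hyps(6) by auto
    qed
  qed
  have D: "\<forall>k<length ?st. \<forall>e\<in>created (step_info (?st!k)). \<forall>j\<le>k. e \<notin> set (tags (?fs!j))"
  proof (intro allI impI ballI)
    fix k e j assume k: "k < length ?st" and e: "e \<in> created (step_info (?st!k))" and j: "j \<le> k"
    have en: "n \<le> e" using C k e by auto
    show "e \<notin> set (tags (?fs!j))"
    proof (cases j)
      case 0 then show ?thesis using tl en by auto
    next
      case (Suc j')
      then obtain k' where k': "k = Suc k'" using j by (cases k) auto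
      then show ?thesis using IH(7) k e j Suc by auto
    qed
  qed
  show ?case
    apply (rule exI[of _ ?fs], rule exI[of _ ?st])
    using IH(1,3) ne A B C D by auto
qed

lemma MAIN:
  assumes sem: "\<forall>v. resp v \<longrightarrow> eval v A \<longrightarrow> eval v B"
  shows "\<exists>fs st. sks_deriv bar (fs,st) \<and> erase (hd fs) = A \<and> erase (last fs) = B \<and> (\<forall>k<length fs. ok (fs!k))
     \<and> (\<forall>k<length st. intok (set (tags (last fs))) (step_info (st!k)))"
proof -
  obtain A0 n0 where a0: "erase A0 = A" "ok A0" "set (tags A0) \<subseteq> {0..<n0}" using TAG[of A 0] by blast
  have ta: "tlt A0 n0" using a0(3) by (auto simp: tlt_def)
  obtain B0 Bc0 m1 where gi: "reach (set (tags B0)) n0 TT (Or B0 Bc0) m1" "erase B0 = B" "erase Bc0 = dualf B"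
    using GI by blast
  define S where "S = set (tags B0)"
  have r0: "reach S n0 A0 A0 n0" by (rule start[OF a0(2) ta])
  have "reach S n0 A0 (And A0 TT) n0" by (rule X_eq[OF r0, where C=Hole]) (auto intro: eq_base.intros)
  then have "reach S n0 A0 (And A0 (Or B0 Bc0)) m1" by (rule X_sub[OF _ _ gi(1)[folded S_def], where C="CAndR A0 Hole"]) auto
  then have "reach S n0 A0 (And A0 (Or Bc0 B0)) m1" by (rule X_eq[where C="CAndR A0 Hole"]) (auto intro: eq_base.intros)
  then have "reach S n0 A0 (Or (And A0 Bc0) B0) m1" by (rule X_sw[where C=Hole]) auto
  then have "reach S n0 A0 (Or (And A0 (And Bc0 TT)) B0) m1" by (rule X_eq[where C="COrL (CAndR A0 Hole) B0"]) (auto intro: eq_base.intros)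
  then have "reach S n0 A0 (Or (And (And A0 (And Bc0 TT)) TT) B0) m1" by (rule X_eq[where C="COrL Hole B0"]) (auto intro: eq_base.intros)
  then have r1: "reach S n0 A0 (Or (And TT (conj [A0, Bc0])) B0) m1" by (rule X_eq[where C="COrL Hole B0"]) (auto intro: eq_base.intros)
  have okt: "ok (And TT (conj [A0, Bc0])) \<and> tlt (And TT (conj [A0, Bc0])) m1" using okt_sub[OF r1, where C="COrL Hole B0"] by simp
  have ns: "\<not> sat TT [A0, Bc0]"
  proof
    assume "sat TT [A0, Bc0]"
    then obtain v where v: "resp v" "eval v (erase A0)" "eval v (erase Bc0)" by (auto simp: sat_def)
    then show False using sem gi(2,3) a0(1) dual_eval by auto
  qed
  obtain m2 where s2: "reach S m1 (And TT (conj [A0, Bc0])) FF m2" using TAB[OF _ _ _ ns] okt by auto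
  have "reach S n0 A0 (Or FF B0) m2" by (rule X_sub[OF r1 _ s2, where C="COrL Hole B0"]) auto
  then have "reach S n0 A0 (Or B0 FF) m2" by (rule X_eq[where C=Hole]) (auto intro: eq_base.intros)
  then have "reach S n0 A0 B0 m2" by (rule X_eq[where C=Hole]) (auto intro: eq_base.intros)
  then obtain fs st where L: "length fs = Suc (length st)" "hd fs = A0" "last fs = B0"
   "\<forall>k<length st. case st!k of (C,r,r',v) \<Rightarrow> fs!k = plug C r \<and> fs!Suc k = plug C r' \<and> rule_inst bar r r' v"
   "\<forall>k<length fs. ok (fs!k)"
   "\<forall>k<length st. intok S (step_info (st!k)) \<and> created (step_info (st!k)) \<subseteq> {n0..}"
   "\<forall>k<length st. \<forall>e\<in>created (step_info (st!k)). \<forall>j\<le>k. e \<notin> set (tags (fs!j))"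
    using to_list by blast
  have fr: "\<forall>k<length st. \<forall>c u l. step_info (st!k) = Some (c,u,l) \<longrightarrow> (\<forall>e\<in>set l. \<forall>j\<le>k. e \<notin> set (tags (fs!j)))"
  proof (intro allI impI ballI)
    fix k c u l e j assume a: "k < length st" "step_info (st!k) = Some (c,u,l)" "e \<in> set l" "j \<le> k"
    then have "e \<in> created (step_info (st!k))" by (simp add: created_def)
    then show "e \<notin> set (tags (fs!j))" using L(7) a(1,4) by blast
  qed
  have di: "\<forall>k<length fs. distinct (tags (fs!k))" using L(5) by (simp add: ok_def)
  have "sks_deriv bar (fs,st)" using L(1) L(4) di fr by (simp add: sks_deriv_def Let_def)
  moreover have "\<forall>k<length st. intok (set (tags (last fs))) (step_info (st!k))"
    using L(6) unfolding L(3) S_def by blast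
  moreover have "erase (hd fs) = A" "erase (last fs) = B" using L(2,3) gi(2) a0(1) by simp_all
  ultimately show ?thesis using L(5) by blast
qed

end

theorem theorem5p17:
  fixes bar :: "'a \<Rightarrow> 'a" and \<Phi> :: "'a deriv"
  assumes "\<And>a. bar (bar a) = a"
    and "\<And>a. bar a \<noteq> a"
    and "sks_deriv bar \<Phi>"
  shows "\<exists>\<Psi>. sks_deriv bar \<Psi> \<and> premiss \<Psi> = premiss \<Phi>
             \<and> conclusion \<Psi> = conclusion \<Phi> \<and> cycle_free \<Psi>"
proof -
  define sgn where "sgn a = (a = (SOME x. x = a \<or> x = bar a))" for a
  have sg: "sgn (bar a) = (\<not> sgn a)" for a
  proof -
    have eqp: "(\<lambda>x. x = bar a \<or> x = bar (bar a)) = (\<lambda>x. x = a \<or> x = bar a)" using assms(1) by auto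
    define c where "c = (SOME x. x = a \<or> x = bar a)"
    have "c = a \<or> c = bar a" unfolding c_def by (rule someI[of _ a]) simp
    moreover have "sgn (bar a) = (bar a = c)" unfolding sgn_def c_def eqp ..
    moreover have "sgn a = (a = c)" unfolding sgn_def c_def ..
    ultimately show ?thesis using assms(2)[of a] by auto
  qed
  interpret cons bar sgn by unfold_locales (auto simp: assms sg)
  obtain fsP stP where P: "\<Phi> = (fsP, stP)" by force
  have sem: "\<forall>v. resp v \<longrightarrow> eval v (premiss \<Phi>) \<longrightarrow> eval v (conclusion \<Phi>)"
    using deriv_sound[of bar fsP stP] assms(3) P by (auto simp: resp_def premiss_def conclusion_def)
  obtain fs st where M: "sks_deriv bar (fs,st)" "erase (hd fs) = premiss \<Phi>" "erase (last fs) = conclusion \<Phi>"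
    "\<forall>k<length fs. ok (fs!k)" "\<forall>k<length st. intok (set (tags (last fs))) (step_info (st!k))"
    using MAIN[OF sem] by blast
  interpret F: flow bar sgn fs st
  proof
    show "bar (bar a) = a" "bar a \<noteq> a" "sgn (bar a) = (\<not> sgn a)" for a using assms sg by auto
    show "sks_deriv bar (fs,st)" by (rule M(1))
    show "even e = sgn a" if "k < length fs" "(a,e) \<in> set (occs (fs!k))" for k a e
      using M(4) that by (fastforce simp: ok_def)
    show "\<exists>s\<in>set l. s \<in> set (tags (last fs))" if "k < length st" "step_info (st!k) = Some (Interaction,u,l)" for k u l
      using M(5) that by (auto simp: intok_def)
  qed
  show ?thesis
    by (rule exI[of _ "(fs,st)"]) (use M F.cycle_free in \<open>auto simp: premiss_def conclusion_def\<close>)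
qed


end
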